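(* Let $q>2$ be a prime power and consider the 2-user broadcast channel over $\mathbb F_q$ with inputs $X_1,X_2\in\mathbb F_q$, in which at each channel use a coefficient $G$ uniform on $\mathbb F_q^\times$ is drawn, independent of the inputs and i.i.d. across uses, Rx-1 observes $\overline Y_1=(X_1,X_2)$ and Rx-2 observes $\overline Y_2=(GX_1+X_2,\,G)$ (a physically degraded and semi-deterministic BC). Then $$\max\{R_2:(\log_2 q,R_2)\in\mathcal C^{\mathrm{NS}}\}=\log_2 q,\qquad \max\{R_2:(\log_2 q,R_2)\in\mathcal C\}=\tfrac12\log_2 q,$$ where $\mathcal C^{\mathrm{NS}}$ and $\mathcal C$ are the capacity regions of this channel with and without NS-assistance.
   Context: Coding framework: messages $W_1,W_2$ independent and uniform on finite sets $\mathcal M_1,\mathcal M_2$; the transmitter controls $(X_1,X_2)$. Classical scheme: stochastic encoder from messages to the $n$ channel inputs and stochastic decoders $\hat W_k=\psi_k(\overline Y_k^{[n]})$. A $\kappa$-partite NS box is a conditional pmf of outputs given inputs (finite output alphabets) such that for every subset of parties the marginal of their outputs depends only on their inputs. NS-assisted scheme: a 3-partite NS box where the transmitter inputs $(W_1,W_2)$ and obtains the channel input sequence as output, and Rx-$k$ inputs $\overline Y_k^{[n]}$ and obtains $\hat W_k$; joint law = $\frac{1}{|\mathcal M_1||\mathcal M_2|}\times$ box distribution $\times$ channel law. Rate pairs are achievable if there is a sequence of schemes with vanishing $\max_k\Pr(\hat W_k\ne W_k)$ and $\lim_n\frac1n\log_2|\mathcal M_k^{(n)}|\ge R_k$; capacity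 region = closure of achievable pairs. *)

theory Defs
  imports "HOL-Analysis.Analysis"
begin

text \<open>A single-use channel law: W x y1 y2 = probability that Rx-1 observes y1 and
  Rx-2 observes y2 when the transmitter sends x (x is the input pair (X1,X2)).\<close>
type_synonym ('x,'y1,'y2) chan = "'x \<Rightarrow> 'y1 \<Rightarrow> 'y2 \<Rightarrow> real"

definition seqs :: "nat \<Rightarrow> 'a list set" where
  "seqs n = {xs. length xs = n}"

definition chan_n :: "('x,'y1,'y2) chan \<Rightarrow> 'x list \<Rightarrow> 'y1 list \<Rightarrow> 'y2 list \<Rightarrow> real" where
  "chan_n W xs ys zs = (\<Prod>i<length xs. W (xs ! i) (ys ! i) (zs ! i))"

text \<open>A 3-partite box: P (w1,w2) v1 v2 a b1 b2 = probability of outputs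
  (a, b1, b2) (transmitter, Rx-1, Rx-2) given inputs ((w1,w2), v1, v2).\<close>
type_synonym ('x,'y1,'y2) box =
  "nat \<times> nat \<Rightarrow> 'y1 list \<Rightarrow> 'y2 list \<Rightarrow> 'x list \<Rightarrow> nat \<Rightarrow> nat \<Rightarrow> real"

text \<open>Message sets are {..<m1} and {..<m2}; the transmitter's output alphabet is the
  set of length-n input sequences, the receivers' input alphabets are length-n output
  sequences, the receivers' output alphabet is the finite set B.\<close>
definition msgs :: "nat \<Rightarrow> nat \<Rightarrow> (nat \<times> nat) set" where
  "msgs m1 m2 = {..<m1} \<times> {..<m2}"

definition cond_pmf_box :: "nat \<Rightarrow> nat \<Rightarrow> nat \<Rightarrow> nat set \<Rightarrow> ('x,'y1,'y2) box \<Rightarrow> bool" where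
  "cond_pmf_box n m1 m2 B P \<longleftrightarrow> finite B \<and>
    (\<forall>u\<in>msgs m1 m2. \<forall>v1\<in>seqs n. \<forall>v2\<in>seqs n.
      (\<forall>a\<in>seqs n. \<forall>b1\<in>B. \<forall>b2\<in>B. P u v1 v2 a b1 b2 \<ge> 0) \<and>
      (\<Sum>a\<in>seqs n. \<Sum>b1\<in>B. \<Sum>b2\<in>B. P u v1 v2 a b1 b2) = 1)"

text \<open>Non-signalling: for every subset of parties, the marginal of their outputs
  depends only on their inputs (all nonempty proper subsets listed).\<close>
definition ns_box :: "nat \<Rightarrow> nat \<Rightarrow> nat \<Rightarrow> nat set \<Rightarrow> ('x,'y1,'y2) box \<Rightarrow> bool" where
  "ns_box n m1 m2 B P \<longleftrightarrow> cond_pmf_box n m1 m2 B P \<and>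
    (\<forall>u\<in>msgs m1 m2. \<forall>u'\<in>msgs m1 m2. \<forall>v1\<in>seqs n. \<forall>v1'\<in>seqs n.
     \<forall>v2\<in>seqs n. \<forall>v2'\<in>seqs n. \<forall>a\<in>seqs n. \<forall>b1\<in>B. \<forall>b2\<in>B.
      \<comment> \<open>parties {Tx, Rx-1}\<close>
      (\<Sum>c\<in>B. P u v1 v2 a b1 c) = (\<Sum>c\<in>B. P u v1 v2' a b1 c) \<and>
      \<comment> \<open>parties {Tx, Rx-2}\<close>
      (\<Sum>c\<in>B. P u v1 v2 a c b2) = (\<Sum>c\<in>B. P u v1' v2 a c b2) \<and>
      \<comment> \<open>parties {Rx-1, Rx-2}\<close>
      (\<Sum>x\<in>seqs n. P u v1 v2 x b1 b2) = (\<Sum>x\<in>seqs n. P u' v1 v2 x b1 b2) \<and>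
      \<comment> \<open>party {Tx}\<close>
      (\<Sum>c\<in>B. \<Sum>d\<in>B. P u v1 v2 a c d) = (\<Sum>c\<in>B. \<Sum>d\<in>B. P u v1' v2' a c d) \<and>
      \<comment> \<open>party {Rx-1}\<close>
      (\<Sum>x\<in>seqs n. \<Sum>d\<in>B. P u v1 v2 x b1 d) = (\<Sum>x\<in>seqs n. \<Sum>d\<in>B. P u' v1 v2' x b1 d) \<and>
      \<comment> \<open>party {Rx-2}\<close>
      (\<Sum>x\<in>seqs n. \<Sum>c\<in>B. P u v1 v2 x c b2) = (\<Sum>x\<in>seqs n. \<Sum>c\<in>B. P u' v1' v2 x c b2))"

text \<open>Classical scheme: stochastic encoder E and stochastic decoders D1, D2; the joint
  law is the product (written as a box of product form).\<close>
definition classical_box :: "nat \<Rightarrow> nat \<Rightarrow> nat \<Rightarrow> nat set \<Rightarrow> ('x,'y1,'y2) box \<Rightarrow> bool" where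
  "classical_box n m1 m2 B P \<longleftrightarrow> finite B \<and>
    (\<exists>(E :: nat \<times> nat \<Rightarrow> 'x list \<Rightarrow> real) (D1 :: 'y1 list \<Rightarrow> nat \<Rightarrow> real)
       (D2 :: 'y2 list \<Rightarrow> nat \<Rightarrow> real).
      (\<forall>u\<in>msgs m1 m2. (\<forall>a\<in>seqs n. E u a \<ge> 0) \<and> (\<Sum>a\<in>seqs n. E u a) = 1) \<and>
      (\<forall>v\<in>seqs n. (\<forall>b\<in>B. D1 v b \<ge> 0) \<and> (\<Sum>b\<in>B. D1 v b) = 1) \<and>
      (\<forall>v\<in>seqs n. (\<forall>b\<in>B. D2 v b \<ge> 0) \<and> (\<Sum>b\<in>B. D2 v b) = 1) \<and>
      (\<forall>u v1 v2 a b1 b2. P u v1 v2 a b1 b2 = E u a * D1 v1 b1 * D2 v2 b2))"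

definition err1 :: "('x,'y1,'y2) chan \<Rightarrow> nat \<Rightarrow> nat \<Rightarrow> nat \<Rightarrow> nat set \<Rightarrow> ('x,'y1,'y2) box \<Rightarrow> real" where
  "err1 W n m1 m2 B P =
    (\<Sum>w1<m1. \<Sum>w2<m2. \<Sum>a\<in>seqs n. \<Sum>y1\<in>seqs n. \<Sum>y2\<in>seqs n. \<Sum>b1\<in>B. \<Sum>b2\<in>B.
       (if b1 \<noteq> w1 then P (w1, w2) y1 y2 a b1 b2 * chan_n W a y1 y2 else 0))
     / (real m1 * real m2)"

definition err2 :: "('x,'y1,'y2) chan \<Rightarrow> nat \<Rightarrow> nat \<Rightarrow> nat \<Rightarrow> nat set \<Rightarrow> ('x,'y1,'y2) box \<Rightarrow> real" where
  "err2 W n m1 m2 B P =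
    (\<Sum>w1<m1. \<Sum>w2<m2. \<Sum>a\<in>seqs n. \<Sum>y1\<in>seqs n. \<Sum>y2\<in>seqs n. \<Sum>b1\<in>B. \<Sum>b2\<in>B.
       (if b2 \<noteq> w2 then P (w1, w2) y1 y2 a b1 b2 * chan_n W a y1 y2 else 0))
     / (real m1 * real m2)"

definition achievable ::
  "(nat \<Rightarrow> nat \<Rightarrow> nat \<Rightarrow> nat set \<Rightarrow> ('x,'y1,'y2) box \<Rightarrow> bool) \<Rightarrow> ('x,'y1,'y2) chan \<Rightarrow> real \<times> real \<Rightarrow> bool" where
  "achievable valid W R \<longleftrightarrow>
    (\<exists>(m1 :: nat \<Rightarrow> nat) (m2 :: nat \<Rightarrow> nat) (B :: nat \<Rightarrow> nat set) (P :: nat \<Rightarrow> ('x,'y1,'y2) box).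
      (\<forall>n. m1 n \<ge> 1 \<and> m2 n \<ge> 1 \<and> valid n (m1 n) (m2 n) (B n) (P n)) \<and>
      ((\<lambda>n. max (err1 W n (m1 n) (m2 n) (B n) (P n)) (err2 W n (m1 n) (m2 n) (B n) (P n)))
         \<longlonglongrightarrow> 0) \<and>
      (\<exists>L. ((\<lambda>n. log 2 (real (m1 n)) / real n) \<longlonglongrightarrow> L) \<and> fst R \<le> L) \<and>
      (\<exists>L. ((\<lambda>n. log 2 (real (m2 n)) / real n) \<longlonglongrightarrow> L) \<and> snd R \<le> L))"

definition capacity_region :: "('x,'y1,'y2) chan \<Rightarrow> (real \<times> real) set" where
  "capacity_region W = closure {R. achievable classical_box W R}"

definition capacity_region_NS :: "('x,'y1,'y2) chan \<Rightarrow> (real \<times> real) set" where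
  "capacity_region_NS W = closure {R. achievable ns_box W R}"

definition bc_chan :: "('a::{field,finite} \<times> 'a, 'a \<times> 'a, 'a \<times> 'a) chan" where
  "bc_chan x y1 y2 =
    (if snd y2 \<noteq> 0 \<and> y1 = x \<and> fst y2 = snd y2 * fst x + snd x
     then 1 / (real CARD('a) - 1) else 0)"

end

theory Submission
  imports Defs "HOL-Real_Asymp.Real_Asymp"
begin

definition gam :: "nat \<Rightarrow> ('a::{field,finite}) list set" where
 "gam n = {G. set G \<subseteq> UNIV - {0} \<and> length G = n}"

definition obs :: "'a::field list \<Rightarrow> ('a\<times>'a) list \<Rightarrow> ('a\<times>'a) list" where
 "obs G a = map (\<lambda>i. (G!i * fst (a!i) + snd (a!i), G!i)) [0..<length G]"

lemma seqs_eq: "seqs n = {xs. set xs \<subseteq> UNIV \<and> length xs = n}"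
  by (simp add: seqs_def)

lemma finite_seqs[simp]: "finite (seqs n :: 'a::finite list set)"
  unfolding seqs_eq by (rule finite_lists_length_eq) simp

lemma card_seqs: "card (seqs n :: 'a::finite list set) = CARD('a) ^ n"
  unfolding seqs_eq by (subst card_lists_length_eq) simp_all

lemma finite_gam[simp]: "finite (gam n)"
  unfolding gam_def by (rule finite_lists_length_eq) simp

lemma card_gam: "card (gam n :: 'a::{field,finite} list set) = (CARD('a) - 1) ^ n"
  unfolding gam_def by (subst card_lists_length_eq) (simp_all add: card_Diff_singleton)

lemma gam_sub: "gam n \<subseteq> seqs n" by (auto simp: gam_def seqs_def)

lemma in_seqs[simp]: "xs \<in> seqs n \<longleftrightarrow> length xs = n" by (simp add: seqs_def)

lemma length_obs[simp]: "length (obs G a) = length G" by (simp add: obs_def)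

lemma prod_if_const:
  "(\<Prod>i<n. if C i then (c::real) else 0) = (if \<forall>i<n. C i then c ^ n else 0)"
  by (induction n) (auto simp: less_Suc_eq)

lemma chan_val:
  fixes a y1 y2 :: "('a::{field,finite} \<times> 'a) list"
  assumes "length a = n" "length y1 = n" "length y2 = n"
  shows "chan_n bc_chan a y1 y2 =
    (if y1 = a \<and> y2 \<in> (\<lambda>G. obs G a) ` gam n then (1 / (real CARD('a) - 1)) ^ n else 0)"
proof -
  have "chan_n bc_chan a y1 y2 = (\<Prod>i<n. if snd (y2!i) \<noteq> 0 \<and> y1!i = a!i \<and>
       fst (y2!i) = snd (y2!i) * fst (a!i) + snd (a!i) then 1 / (real CARD('a) - 1) else 0)"
    unfolding chan_n_def bc_chan_def using assms by simp
  also have "\<dots> = (if \<forall>i<n. snd (y2!i) \<noteq> 0 \<and> y1!i = a!i \<and>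
       fst (y2!i) = snd (y2!i) * fst (a!i) + snd (a!i) then (1 / (real CARD('a) - 1)) ^ n else 0)"
    by (rule prod_if_const)
  also have "(\<forall>i<n. snd (y2!i) \<noteq> 0 \<and> y1!i = a!i \<and>
       fst (y2!i) = snd (y2!i) * fst (a!i) + snd (a!i)) \<longleftrightarrow>
      (y1 = a \<and> y2 \<in> (\<lambda>G. obs G a) ` gam n)"
  proof
    assume H: "\<forall>i<n. snd (y2!i) \<noteq> 0 \<and> y1!i = a!i \<and>
       fst (y2!i) = snd (y2!i) * fst (a!i) + snd (a!i)"
    have "y1 = a" using H assms by (intro nth_equalityI) auto
    moreover have "map snd y2 \<in> gam n" using H assms
      by (fastforce simp: gam_def in_set_conv_nth)
    moreover have "y2 = obs (map snd y2) a" using H assms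
      by (intro nth_equalityI) (auto simp: obs_def prod_eq_iff)
    ultimately show "y1 = a \<and> y2 \<in> (\<lambda>G. obs G a) ` gam n" by blast
  next
    assume "y1 = a \<and> y2 \<in> (\<lambda>G. obs G a) ` gam n"
    then obtain G where "y1 = a" "G \<in> gam n" "y2 = obs G a" by blast
    then show "\<forall>i<n. snd (y2!i) \<noteq> 0 \<and> y1!i = a!i \<and>
       fst (y2!i) = snd (y2!i) * fst (a!i) + snd (a!i)"
      by (auto simp: gam_def obs_def) (metis DiffD2 nth_mem singletonI subset_iff)
  qed
  finally show ?thesis .
qed

lemma inj_obs: "inj_on (\<lambda>G. obs G a) (gam n)"
proof (rule inj_onI)
  fix G G' assume "G \<in> gam n" "G' \<in> gam n" "obs G a = obs G' a"
  then have "map snd (obs G a) = map snd (obs G' a)" by simp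
  moreover have "\<And>G. map snd (obs G a) = G" by (intro nth_equalityI) (auto simp: obs_def)
  ultimately show "G = G'" by simp
qed

lemma obs_in_seqs: "G \<in> gam n \<Longrightarrow> obs G a \<in> seqs n" by (simp add: gam_def)

lemma chan_reparam:
  fixes a :: "('a::{field,finite} \<times> 'a) list"
  assumes "length a = n"
  shows "(\<Sum>y1\<in>seqs n. \<Sum>y2\<in>seqs n. chan_n bc_chan a y1 y2 * f y1 y2) =
     (1 / (real CARD('a) - 1)) ^ n * (\<Sum>G\<in>gam n. f a (obs G a))"
proof -
  let ?c = "(1 / (real CARD('a) - 1)) ^ n"
  let ?O = "(\<lambda>G. obs G a) ` gam n"
  have "(\<Sum>y1\<in>seqs n. \<Sum>y2\<in>seqs n. chan_n bc_chan a y1 y2 * f y1 y2) =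
     (\<Sum>y1\<in>seqs n. \<Sum>y2\<in>seqs n. if y1 = a \<and> y2 \<in> ?O then ?c * f y1 y2 else 0)"
    using assms by (intro sum.cong refl) (simp add: chan_val)
  also have "\<dots> = (\<Sum>y1\<in>seqs n. if y1 = a then (\<Sum>y2\<in>seqs n. if y2 \<in> ?O then ?c * f a y2 else 0) else 0)"
    by (intro sum.cong refl) auto
  also have "\<dots> = (\<Sum>y2\<in>seqs n. if y2 \<in> ?O then ?c * f a y2 else 0)"
    using assms by (simp add: sum.delta)
  also have "\<dots> = (\<Sum>y2\<in>?O. ?c * f a y2)"
    using gam_sub obs_in_seqs by (subst sum.If_cases) (auto intro!: sum.cong)
  also have "\<dots> = ?c * (\<Sum>G\<in>gam n. f a (obs G a))"
    by (simp add: sum.reindex[OF inj_obs] sum_distrib_left)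
  finally show ?thesis .
qed

lemma err_inner:
  fixes a :: "('a::{field,finite} \<times> 'a) list"
  assumes "length a = n"
  shows "(\<Sum>y1\<in>seqs n. \<Sum>y2\<in>seqs n. \<Sum>b1\<in>B. \<Sum>b2\<in>B.
           (if C b1 b2 then h y1 y2 b1 b2 * chan_n bc_chan a y1 y2 else 0)) =
     (1 / (real CARD('a) - 1)) ^ n * (\<Sum>G\<in>gam n. \<Sum>b1\<in>B. \<Sum>b2\<in>B.
           (if C b1 b2 then h a (obs G a) b1 b2 else 0))"
proof -
  have "(\<Sum>y1\<in>seqs n. \<Sum>y2\<in>seqs n. \<Sum>b1\<in>B. \<Sum>b2\<in>B.
           (if C b1 b2 then h y1 y2 b1 b2 * chan_n bc_chan a y1 y2 else 0)) =
        (\<Sum>y1\<in>seqs n. \<Sum>y2\<in>seqs n. chan_n bc_chan a y1 y2 * (\<Sum>b1\<in>B. \<Sum>b2\<in>B.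
           (if C b1 b2 then h y1 y2 b1 b2 else 0)))"
    by (simp add: sum_distrib_left if_distrib mult.commute cong: if_cong)
  also have "\<dots> = (1 / (real CARD('a) - 1)) ^ n * (\<Sum>G\<in>gam n. \<Sum>b1\<in>B. \<Sum>b2\<in>B.
           (if C b1 b2 then h a (obs G a) b1 b2 else 0))"
    by (rule chan_reparam[OF assms])
  finally show ?thesis .
qed

lemma err1_eq:
  "err1 (bc_chan :: ('a::{field,finite} \<times> 'a, 'a \<times> 'a, 'a \<times> 'a) chan) n m1 m2 B P =
    (\<Sum>w1<m1. \<Sum>w2<m2. \<Sum>a\<in>seqs n. (1 / (real CARD('a) - 1)) ^ n * (\<Sum>G\<in>gam n.
      \<Sum>b1\<in>B. \<Sum>b2\<in>B. (if b1 \<noteq> w1 then P (w1, w2) a (obs G a) a b1 b2 else 0)))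
     / (real m1 * real m2)"
  unfolding err1_def
  by (intro arg_cong2[where f="(/)"] sum.cong refl, subst err_inner) auto

lemma err2_eq:
  "err2 (bc_chan :: ('a::{field,finite} \<times> 'a, 'a \<times> 'a, 'a \<times> 'a) chan) n m1 m2 B P =
    (\<Sum>w1<m1. \<Sum>w2<m2. \<Sum>a\<in>seqs n. (1 / (real CARD('a) - 1)) ^ n * (\<Sum>G\<in>gam n.
      \<Sum>b1\<in>B. \<Sum>b2\<in>B. (if b2 \<noteq> w2 then P (w1, w2) a (obs G a) a b1 b2 else 0)))
     / (real m1 * real m2)"
  unfolding err2_def
  by (intro arg_cong2[where f="(/)"] sum.cong refl, subst err_inner) auto


definition piG :: "'a::field list \<Rightarrow> ('a\<times>'a) list \<Rightarrow> 'a list" where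
 "piG G a = map (\<lambda>i. G!i * fst (a!i) + snd (a!i)) [0..<length G]"

definition oy :: "'a list \<Rightarrow> 'a list \<Rightarrow> ('a\<times>'a) list" where
 "oy y G = map (\<lambda>i. (y!i, G!i)) [0..<length G]"

lemma obs_oy: "obs G a = oy (piG G a) G"
  by (simp add: obs_def oy_def piG_def)

lemma length_piG[simp]: "length (piG G a) = length G" by (simp add: piG_def)
lemma length_oy[simp]: "length (oy y G) = length G" by (simp add: oy_def)

lemma sum_if_neq:
  fixes f :: "'b \<Rightarrow> real"
  assumes "finite B"
  shows "(\<Sum>b\<in>B. if b \<noteq> w then f b else 0) = sum f B - (if w \<in> B then f w else 0)"
proof -
  have "(\<Sum>b\<in>B. if b \<noteq> w then f b else 0) = (\<Sum>b\<in>B. f b - (if w = b then f b else 0))"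
    by (intro sum.cong) auto
  also have "\<dots> = sum f B - (\<Sum>b\<in>B. if w = b then f b else 0)"
    by (simp add: sum_subtractf)
  also have "(\<Sum>b\<in>B. if w = b then f b else 0) = (if w \<in> B then f w else 0)"
    using assms by (simp add: sum.delta)
  finally show ?thesis .
qed

lemma real_card_gam: "real (card (gam n :: 'a::{field,finite} list set)) = (real CARD('a) - 1) ^ n"
  by (simp add: card_gam of_nat_diff)

lemma c_gam:
  assumes "CARD('a::{field,finite}) > 2"
  shows "(1 / (real CARD('a) - 1)) ^ n * real (card (gam n :: 'a list set)) = 1"
proof -
  have "real CARD('a) - 1 \<noteq> 0" using assms by simp
  then show ?thesis by (simp add: real_card_gam power_one_over field_simps)
qed

lemma ns_err2_bound:
  fixes P :: "('a::{field,finite} \<times> 'a, 'a \<times> 'a, 'a \<times> 'a) box"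
  assumes ns: "ns_box n m1 m2 B P" and m: "m1 \<ge> 1" "m2 \<ge> 1" and q: "CARD('a) > 2"
  shows "err2 bc_chan n m1 m2 B P \<ge> 1 - real CARD('a) ^ n / real m2"
proof -
  have cp: "cond_pmf_box n m1 m2 B P" using ns unfolding ns_box_def by blast
  have fin: "finite B" using cp by (simp add: cond_pmf_box_def)
  have nonneg: "\<And>u v1 v2 a b1 b2. u \<in> msgs m1 m2 \<Longrightarrow> length v1 = n \<Longrightarrow> length v2 = n \<Longrightarrow>
      length a = n \<Longrightarrow> b1 \<in> B \<Longrightarrow> b2 \<in> B \<Longrightarrow> P u v1 v2 a b1 b2 \<ge> 0"
    using cp by (simp add: cond_pmf_box_def)
  have norm: "\<And>u v1 v2. u \<in> msgs m1 m2 \<Longrightarrow> length v1 = n \<Longrightarrow> length v2 = n \<Longrightarrow>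
      (\<Sum>a\<in>seqs n. \<Sum>b1\<in>B. \<Sum>b2\<in>B. P u v1 v2 a b1 b2) = 1"
    using cp by (simp add: cond_pmf_box_def)
  define u0 where "u0 = (0::nat, 0::nat)"
  have u0: "u0 \<in> msgs m1 m2" using m by (simp add: u0_def msgs_def)
  define v0 where "v0 = replicate n (undefined :: 'a \<times> 'a)"
  have v0: "length v0 = n" by (simp add: v0_def)
  have Bne: "B \<noteq> {}"
  proof
    assume "B = {}"
    then show False using norm[OF u0 v0 v0] by simp
  qed
  then obtain b0 where b0: "b0 \<in> B" by blast
  have nsq: "\<forall>u\<in>msgs m1 m2. \<forall>u'\<in>msgs m1 m2. \<forall>v1\<in>seqs n. \<forall>v1'\<in>seqs n.
     \<forall>v2\<in>seqs n. \<forall>v2'\<in>seqs n. \<forall>a\<in>seqs n. \<forall>b1\<in>B. \<forall>b2\<in>B.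
      (\<Sum>c\<in>B. P u v1 v2 a c b2) = (\<Sum>c\<in>B. P u v1' v2 a c b2) \<and>
      (\<Sum>c\<in>B. \<Sum>d\<in>B. P u v1 v2 a c d) = (\<Sum>c\<in>B. \<Sum>d\<in>B. P u v1' v2' a c d) \<and>
      (\<Sum>x\<in>seqs n. \<Sum>c\<in>B. P u v1 v2 x c b2) = (\<Sum>x\<in>seqs n. \<Sum>c\<in>B. P u' v1' v2 x c b2)"
    using ns unfolding ns_box_def by blast
  have ns_all: "(\<Sum>c\<in>B. P u v1 v2 a c b2) = (\<Sum>c\<in>B. P u v1' v2 a c b2) \<and>
      (\<Sum>c\<in>B. \<Sum>d\<in>B. P u v1 v2 a c d) = (\<Sum>c\<in>B. \<Sum>d\<in>B. P u v1' v2' a c d) \<and>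
      (\<Sum>x\<in>seqs n. \<Sum>c\<in>B. P u v1 v2 x c b2) = (\<Sum>x\<in>seqs n. \<Sum>c\<in>B. P u' v1' v2 x c b2)"
    if "u \<in> msgs m1 m2" "u' \<in> msgs m1 m2" "length v1 = n" "length v1' = n"
      "length v2 = n" "length v2' = n" "length a = n" "b1 \<in> B" "b2 \<in> B"
    for u u' v1 v1' v2 v2' a b1 b2
    using nsq that unfolding in_seqs[symmetric] by blast
  have ns2: "\<And>u v1 v1' v2 a b2. u \<in> msgs m1 m2 \<Longrightarrow>
     length v1 = n \<Longrightarrow> length v1' = n \<Longrightarrow> length v2 = n \<Longrightarrow> length a = n \<Longrightarrow> b2 \<in> B \<Longrightarrow>
      (\<Sum>c\<in>B. P u v1 v2 a c b2) = (\<Sum>c\<in>B. P u v1' v2 a c b2)"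
    using ns_all b0 by blast
  have nsT: "\<And>u v1 v1' v2 v2' a. u \<in> msgs m1 m2 \<Longrightarrow>
     length v1 = n \<Longrightarrow> length v1' = n \<Longrightarrow> length v2 = n \<Longrightarrow> length v2' = n \<Longrightarrow> length a = n \<Longrightarrow>
      (\<Sum>c\<in>B. \<Sum>d\<in>B. P u v1 v2 a c d) = (\<Sum>c\<in>B. \<Sum>d\<in>B. P u v1' v2' a c d)"
    using ns_all b0 by blast
  have nsR: "\<And>u u' v1 v1' v2 b2. u \<in> msgs m1 m2 \<Longrightarrow> u' \<in> msgs m1 m2 \<Longrightarrow>
     length v1 = n \<Longrightarrow> length v1' = n \<Longrightarrow> length v2 = n \<Longrightarrow> b2 \<in> B \<Longrightarrow>
      (\<Sum>x\<in>seqs n. \<Sum>c\<in>B. P u v1 v2 x c b2) = (\<Sum>x\<in>seqs n. \<Sum>c\<in>B. P u' v1' v2 x c b2)"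
    using ns_all[OF _ _ _ _ _ v0 v0 b0] by blast
  define R where "R u v2 a b2 = (\<Sum>b1\<in>B. P u v0 v2 a b1 b2)" for u v2 a b2
  define T where "T u a = (\<Sum>b1\<in>B. \<Sum>b2\<in>B. P u v0 v0 a b1 b2)" for u a
  define Q where "Q v2 b2 = (\<Sum>x\<in>seqs n. \<Sum>b1\<in>B. P u0 v0 v2 x b1 b2)" for v2 b2
  define c where "c = (1 / (real CARD('a) - 1)) ^ n"
  define X where "X u G a = (if snd u \<in> B then R u (obs G a) a (snd u) else 0)" for u G a
  have R_nonneg: "R u v2 a b2 \<ge> 0" if "u \<in> msgs m1 m2" "length v2 = n" "length a = n" "b2 \<in> B"
    for u v2 a b2
    unfolding R_def using that v0 by (intro sum_nonneg nonneg) auto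
  have step1: "(\<Sum>b1\<in>B. \<Sum>b2\<in>B. if b2 \<noteq> snd u then P u a (obs G a) a b1 b2 else 0) = T u a - X u G a"
    if u: "u \<in> msgs m1 m2" and a: "length a = n" and G: "G \<in> gam n" for u a G
  proof -
    have lo: "length (obs G a) = n" using G by (simp add: gam_def)
    have "(\<Sum>b1\<in>B. \<Sum>b2\<in>B. if b2 \<noteq> snd u then P u a (obs G a) a b1 b2 else 0) =
          (\<Sum>b2\<in>B. if b2 \<noteq> snd u then (\<Sum>b1\<in>B. P u a (obs G a) a b1 b2) else 0)"
      by (subst sum.swap) (intro sum.cong refl, auto)
    also have "\<dots> = (\<Sum>b2\<in>B. if b2 \<noteq> snd u then R u (obs G a) a b2 else 0)"
      unfolding R_def using ns2[OF u a v0 lo a] by (intro sum.cong refl) auto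
    also have "\<dots> = (\<Sum>b2\<in>B. R u (obs G a) a b2) - X u G a"
      unfolding X_def by (rule sum_if_neq[OF fin])
    also have "(\<Sum>b2\<in>B. R u (obs G a) a b2) = (\<Sum>b1\<in>B. \<Sum>b2\<in>B. P u v0 (obs G a) a b1 b2)"
      unfolding R_def by (rule sum.swap)
    also have "\<dots> = T u a" unfolding T_def by (rule nsT[OF u v0 v0 lo v0 a])
    finally show ?thesis .
  qed
  have step2: "(\<Sum>a\<in>seqs n. T u a) = 1" if "u \<in> msgs m1 m2" for u
    unfolding T_def by (rule norm[OF that v0 v0])
  have step3: "(\<Sum>a\<in>seqs n. X u G a) \<le> (\<Sum>y\<in>seqs n. if snd u \<in> B then Q (oy y G) (snd u) else 0)"
    if u: "u \<in> msgs m1 m2" and G: "G \<in> gam n" for u G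
  proof (cases "snd u \<in> B")
    case False then show ?thesis by (simp add: X_def)
  next
    case True
    have lG: "length G = n" using G by (simp add: gam_def)
    have "(\<Sum>a\<in>seqs n. X u G a) = (\<Sum>a\<in>seqs n. R u (oy (piG G a) G) a (snd u))"
      using True by (simp add: X_def obs_oy)
    also have "\<dots> = (\<Sum>y\<in>piG G ` seqs n. \<Sum>a\<in>{a. a \<in> seqs n \<and> piG G a = y}. R u (oy y G) a (snd u))"
      by (subst sum.image_gen[OF finite_seqs, where g="piG G"]) (intro sum.cong refl, auto)
    also have "\<dots> \<le> (\<Sum>y\<in>piG G ` seqs n. \<Sum>a\<in>seqs n. R u (oy y G) a (snd u))"
      using True u lG by (intro sum_mono sum_mono2 R_nonneg) auto
    also have "\<dots> \<le> (\<Sum>y\<in>seqs n. \<Sum>a\<in>seqs n. R u (oy y G) a (snd u))"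
      using True u lG by (intro sum_mono2 sum_nonneg R_nonneg) (auto simp: lG)
    also have "\<dots> = (\<Sum>y\<in>seqs n. Q (oy y G) (snd u))"
      unfolding R_def Q_def using True u lG by (intro sum.cong refl nsR u0 v0) auto
    finally show ?thesis using True by simp
  qed
  have step4: "(\<Sum>w2<m2. if w2 \<in> B then Q v2 w2 else 0) \<le> 1" if "length v2 = n" for v2
  proof -
    have Qn: "Q v2 b \<ge> 0" if "b \<in> B" for b
      unfolding Q_def using that \<open>length v2 = n\<close> u0 v0 by (intro sum_nonneg nonneg) auto
    have "(\<Sum>w2<m2. if w2 \<in> B then Q v2 w2 else 0) = (\<Sum>w2\<in>{..<m2} \<inter> B. Q v2 w2)"
      by (simp add: sum.inter_restrict)
    also have "\<dots> \<le> (\<Sum>b\<in>B. Q v2 b)" using fin Qn by (intro sum_mono2) auto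
    also have "\<dots> = 1" unfolding Q_def
    proof -
      have "(\<Sum>b\<in>B. \<Sum>x\<in>seqs n. \<Sum>b1\<in>B. P u0 v0 v2 x b1 b) = (\<Sum>x\<in>seqs n. \<Sum>b\<in>B. \<Sum>b1\<in>B. P u0 v0 v2 x b1 b)"
        by (rule sum.swap)
      also have "\<dots> = (\<Sum>x\<in>seqs n. \<Sum>b1\<in>B. \<Sum>b\<in>B. P u0 v0 v2 x b1 b)"
        by (intro sum.cong refl sum.swap)
      finally show "(\<Sum>b\<in>B. \<Sum>x\<in>seqs n. \<Sum>b1\<in>B. P u0 v0 v2 x b1 b) = 1"
        using norm[OF u0 v0 \<open>length v2 = n\<close>] by simp
    qed
    finally show ?thesis .
  qed
  have inner: "(\<Sum>a\<in>seqs n. c * (\<Sum>G\<in>gam n. \<Sum>b1\<in>B. \<Sum>b2\<in>B.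
       (if b2 \<noteq> w2 then P (w1, w2) a (obs G a) a b1 b2 else 0))) =
      1 - c * (\<Sum>G\<in>gam n. \<Sum>a\<in>seqs n. X (w1, w2) G a)"
    if "w1 < m1" "w2 < m2" for w1 w2
  proof -
    have u: "(w1, w2) \<in> msgs m1 m2" using that by (simp add: msgs_def)
    have "(\<Sum>a\<in>seqs n. c * (\<Sum>G\<in>gam n. \<Sum>b1\<in>B. \<Sum>b2\<in>B.
       (if b2 \<noteq> w2 then P (w1, w2) a (obs G a) a b1 b2 else 0))) =
       (\<Sum>a\<in>seqs n. c * (\<Sum>G\<in>gam n. T (w1, w2) a - X (w1, w2) G a))"
      using step1[OF u] by (intro sum.cong refl arg_cong2[where f="(*)"]) auto
    also have "\<dots> = c * real (card (gam n :: 'a list set)) * (\<Sum>a\<in>seqs n. T (w1, w2) a)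
         - c * (\<Sum>a\<in>seqs n. \<Sum>G\<in>gam n. X (w1, w2) G a)"
      by (simp add: sum_subtractf sum_distrib_left right_diff_distrib mult.assoc)
    also have "\<dots> = 1 - c * (\<Sum>G\<in>gam n. \<Sum>a\<in>seqs n. X (w1, w2) G a)"
      using step2[OF u] c_gam[OF q] by (simp add: c_def sum.swap[of _ "seqs n"])
    finally show ?thesis .
  qed
  have bound: "(\<Sum>w1<m1. \<Sum>w2<m2. \<Sum>G\<in>gam n. \<Sum>a\<in>seqs n. X (w1, w2) G a)
      \<le> real m1 * (real (card (gam n :: 'a list set)) * real CARD('a) ^ n)"
  proof -
    have "(\<Sum>w1<m1. \<Sum>w2<m2. \<Sum>G\<in>gam n. \<Sum>a\<in>seqs n. X (w1, w2) G a)
       \<le> (\<Sum>w1<m1. \<Sum>w2<m2. \<Sum>G\<in>gam n. \<Sum>y\<in>seqs n. if w2 \<in> B then Q (oy y G) w2 else 0)"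
      by (intro sum_mono) (metis step3 snd_conv mem_Sigma_iff msgs_def)
    also have "\<dots> = (\<Sum>w1<m1. \<Sum>G\<in>gam n. \<Sum>y\<in>seqs n. \<Sum>w2<m2. if w2 \<in> B then Q (oy y G) w2 else 0)"
      by (intro sum.cong refl) (simp add: sum.swap[of _ "{..<m2}"] sum.swap[of _ "{..<m2}" "seqs n"])
    also have "\<dots> \<le> (\<Sum>w1<m1. \<Sum>G\<in>(gam n :: 'a list set). \<Sum>y\<in>(seqs n :: 'a list set). (1::real))"
      by (rule sum_mono, rule sum_mono, rule sum_mono, rule step4) (auto simp: gam_def)
    also have "\<dots> = real m1 * (real (card (gam n :: 'a list set)) * real CARD('a) ^ n)"
      by (simp add: card_seqs)
    finally show ?thesis .
  qed
  have "err2 bc_chan n m1 m2 B P = (real m1 * real m2 - c * (\<Sum>w1<m1. \<Sum>w2<m2. \<Sum>G\<in>gam n. \<Sum>a\<in>seqs n. X (w1, w2) G a)) / (real m1 * real m2)"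
    unfolding err2_eq c_def[symmetric] using inner by (simp add: sum_subtractf sum_distrib_left)
  also have "\<dots> \<ge> (real m1 * real m2 - c * (real m1 * (real (card (gam n :: 'a list set)) * real CARD('a) ^ n))) / (real m1 * real m2)"
    using bound m by (intro divide_right_mono diff_left_mono mult_left_mono) (auto simp: c_def)
  moreover have "(real m1 * real m2 - c * (real m1 * (real (card (gam n :: 'a list set)) * real CARD('a) ^ n))) / (real m1 * real m2)
     = 1 - real CARD('a) ^ n / real m2"
  proof -
    have "c * (real m1 * (real (card (gam n :: 'a list set)) * real CARD('a) ^ n)) = real m1 * real CARD('a) ^ n"
      using c_gam[OF q, of n] unfolding c_def[symmetric] by (simp add: algebra_simps)
    then show ?thesis using m by (simp add: field_simps)
  qed
  ultimately show ?thesis by simp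
qed

definition Qg :: "(('a::field \<times> 'a) list \<Rightarrow> real) \<Rightarrow> 'a list \<Rightarrow> 'a list \<Rightarrow> real" where
  "Qg p G y = (\<Sum>a\<in>{a. a \<in> seqs (length G) \<and> piG G a = y}. p a)"

definition Hs :: "(('a::{field,finite} \<times> 'a) list \<Rightarrow> real) \<Rightarrow> real \<Rightarrow> 'a list \<Rightarrow> 'a list set" where
  "Hs p l G = {y \<in> piG G ` seqs (length G). Qg p G y > l}"

definition Aw :: "(('a::{field,finite} \<times> 'a) list \<Rightarrow> real) \<Rightarrow> real \<Rightarrow> 'a list \<Rightarrow> real" where
  "Aw p l G = (\<Sum>a\<in>seqs (length G). if piG G a \<in> Hs p l G then p a else 0)"

lemma sum_Qg:
  fixes p :: "('a::{field,finite} \<times> 'a) list \<Rightarrow> real"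
  shows "(\<Sum>y\<in>piG G ` seqs (length G). Qg p G y) = (\<Sum>a\<in>seqs (length G). p a)"
  unfolding Qg_def by (rule sum.image_gen[symmetric]) simp

lemma card_Hs:
  fixes p :: "('a::{field,finite} \<times> 'a) list \<Rightarrow> real"
  assumes l: "l > 0" and pn: "\<And>a. a \<in> seqs (length G) \<Longrightarrow> p a \<ge> 0"
    and ps: "(\<Sum>a\<in>seqs (length G). p a) = 1"
  shows "real (card (Hs p l G)) \<le> 1 / l"
proof -
  have fin: "finite (piG G ` seqs (length G))" by simp
  have Qn: "Qg p G y \<ge> 0" for y unfolding Qg_def using pn by (intro sum_nonneg) auto
  have "real (card (Hs p l G)) * l = (\<Sum>y\<in>Hs p l G. l)" by simp
  also have "\<dots> \<le> (\<Sum>y\<in>Hs p l G. Qg p G y)"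
    by (intro sum_mono) (auto simp: Hs_def less_imp_le)
  also have "\<dots> \<le> (\<Sum>y\<in>piG G ` seqs (length G). Qg p G y)"
    using fin Qn by (intro sum_mono2) (auto simp: Hs_def)
  also have "\<dots> = 1" using sum_Qg[of p G] ps by simp
  finally show ?thesis using l by (simp add: field_simps)
qed

lemma inj_pair:
  fixes G :: "'a::{field,finite} list" and k :: 'a
  assumes k: "k \<noteq> 0" "k \<noteq> 1" and G: "G \<in> gam n"
  shows "inj_on (\<lambda>a. (piG G a, piG (map ((*) k) G) a)) (seqs n)"
proof (rule inj_onI)
  fix a b assume a: "a \<in> seqs n" and b: "b \<in> seqs n"
    and e: "(piG G a, piG (map ((*) k) G) a) = (piG G b, piG (map ((*) k) G) b)"
  have lG: "length G = n" and nz: "\<And>i. i < n \<Longrightarrow> G ! i \<noteq> 0"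
    using G by (auto simp: gam_def) (metis DiffD2 G gam_def mem_Collect_eq nth_mem singletonI subset_iff)
  show "a = b"
  proof (rule nth_equalityI)
    show "length a = length b" using a b by simp
  next
    fix i assume "i < length a"
    then have i: "i < n" using a by simp
    have e1: "G!i * fst (a!i) + snd (a!i) = G!i * fst (b!i) + snd (b!i)"
      using arg_cong[OF e, of "\<lambda>p. fst p ! i"] i lG by (simp add: piG_def)
    have e2: "k * G!i * fst (a!i) + snd (a!i) = k * G!i * fst (b!i) + snd (b!i)"
      using arg_cong[OF e, of "\<lambda>p. snd p ! i"] i lG by (simp add: piG_def)
    have "(k - 1) * G!i * (fst (a!i) - fst (b!i)) = 0"
    proof -
      have "(k - 1) * G!i * (fst (a!i) - fst (b!i)) = (k * G!i * fst (a!i) + snd (a!i)) - (G!i * fst (a!i) + snd (a!i))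
        - ((k * G!i * fst (b!i) + snd (b!i)) - (G!i * fst (b!i) + snd (b!i)))"
        by (simp add: algebra_simps)
      also have "\<dots> = 0" by (simp only: e1 e2) simp
      finally show ?thesis .
    qed
    then have f: "fst (a!i) = fst (b!i)" using k nz[OF i] by simp
    then have "snd (a!i) = snd (b!i)" using e1 by simp
    with f show "a!i = b!i" by (simp add: prod_eq_iff)
  qed
qed


lemma Aw_pair:
  fixes p :: "('a::{field,finite} \<times> 'a) list \<Rightarrow> real" and G G' :: "'a list"
  assumes pn: "\<And>a. a \<in> seqs (length G) \<Longrightarrow> p a \<ge> 0"
    and ps: "(\<Sum>a\<in>seqs (length G). p a) = 1" and len: "length G' = length G"
  shows "Aw p l G + Aw p l G' \<le> 1 + (\<Sum>a\<in>seqs (length G).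
      if piG G a \<in> Hs p l G \<and> piG G' a \<in> Hs p l G' then p a else 0)"
proof -
  have "Aw p l G + Aw p l G' = (\<Sum>a\<in>seqs (length G).
      (if piG G a \<in> Hs p l G then p a else 0) + (if piG G' a \<in> Hs p l G' then p a else 0))"
    unfolding Aw_def len by (simp add: sum.distrib)
  also have "\<dots> \<le> (\<Sum>a\<in>seqs (length G). p a +
      (if piG G a \<in> Hs p l G \<and> piG G' a \<in> Hs p l G' then p a else 0))"
    using pn by (intro sum_mono) auto
  also have "\<dots> = 1 + (\<Sum>a\<in>seqs (length G).
      if piG G a \<in> Hs p l G \<and> piG G' a \<in> Hs p l G' then p a else 0)"
    using ps by (simp add: sum.distrib)
  finally show ?thesis .
qed

lemma card_S:
  fixes G :: "'a::{field,finite} list" and k :: 'a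
  assumes k: "k \<noteq> 0" "k \<noteq> 1" and G: "G \<in> gam n"
  shows "card {a \<in> seqs n. piG G a \<in> Hs p l G \<and> piG (map ((*) k) G) a \<in> Hs p l (map ((*) k) G)}
     \<le> card (Hs p l G) * card (Hs p l (map ((*) k) G))"
proof -
  have "card {a \<in> seqs n. piG G a \<in> Hs p l G \<and> piG (map ((*) k) G) a \<in> Hs p l (map ((*) k) G)}
     \<le> card (Hs p l G \<times> Hs p l (map ((*) k) G))"
    by (rule card_inj_on_le[where f="\<lambda>a. (piG G a, piG (map ((*) k) G) a)"])
       (auto intro: inj_on_subset[OF inj_pair[OF k G]] simp: Hs_def)
  then show ?thesis by (simp add: card_cartesian_product)
qed

lemma sum_gam_scale:
  fixes k :: "'a::{field,finite}"
  assumes k: "k \<noteq> 0"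
  shows "(\<Sum>G\<in>gam n. f (map ((*) k) G)) = (\<Sum>G\<in>gam n. f G)"
proof (rule sum.reindex_bij_betw)
  show "bij_betw (map ((*) k)) (gam n) (gam n)"
  proof (rule bij_betw_byWitness[where f'="map ((*) (inverse k))"])
    show "\<forall>a\<in>gam n. map ((*) (inverse k)) (map ((*) k) a) = a"
      using k by (simp add: map_idI)
    show "\<forall>a'\<in>gam n. map ((*) k) (map ((*) (inverse k)) a') = a'"
      using k by (simp add: map_idI)
    show "map ((*) k) ` gam n \<subseteq> gam n" using k by (auto simp: gam_def) blast
    show "map ((*) (inverse k)) ` gam n \<subseteq> gam n" using k by (auto simp: gam_def) blast
  qed
qed


lemma exists_k:
  assumes "CARD('a::{field,finite}) > 2"
  obtains k :: "'a::{field,finite}" where "k \<noteq> 0" "k \<noteq> 1"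
proof -
  have "card (UNIV - {0, 1::'a}) = CARD('a) - 2"
    by (subst card_Diff_subset) auto
  then have "card (UNIV - {0, 1::'a}) \<noteq> 0" using assms by linarith
  then have "UNIV - {0, 1::'a} \<noteq> {}" by (metis card.empty)
  then show ?thesis using that by blast
qed

lemma cl_bound:
  fixes P :: "('a::{field,finite} \<times> 'a, 'a \<times> 'a, 'a \<times> 'a) box"
  assumes cb: "classical_box n m1 m2 B P" and m: "m1 \<ge> 1" "m2 \<ge> 1" and q: "CARD('a) > 2"
    and l: "l > 0"
  shows "1 - err2 bc_chan n m1 m2 B P \<le>
     (1 + 1 / (l^2 * real m1) + err1 bc_chan n m1 m2 B P) / 2 + l * real CARD('a) ^ n / real m2"
proof -
  have fin: "finite B" using cb by (simp add: classical_box_def)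
  obtain E :: "nat \<times> nat \<Rightarrow> ('a\<times>'a) list \<Rightarrow> real" and D1 :: "('a\<times>'a) list \<Rightarrow> nat \<Rightarrow> real"
    and D2 :: "('a\<times>'a) list \<Rightarrow> nat \<Rightarrow> real"
    where Ep: "\<forall>u\<in>msgs m1 m2. (\<forall>a\<in>seqs n. E u a \<ge> 0) \<and> (\<Sum>a\<in>seqs n. E u a) = 1"
      and D1p: "\<forall>v\<in>seqs n. (\<forall>b\<in>B. D1 v b \<ge> 0) \<and> (\<Sum>b\<in>B. D1 v b) = 1"
      and D2p: "\<forall>v\<in>seqs n. (\<forall>b\<in>B. D2 v b \<ge> 0) \<and> (\<Sum>b\<in>B. D2 v b) = 1"
      and Pe: "\<And>u v1 v2 a b1 b2. P u v1 v2 a b1 b2 = E u a * D1 v1 b1 * D2 v2 b2"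
    using cb unfolding classical_box_def by blast
  obtain k :: 'a where k: "k \<noteq> 0" "k \<noteq> 1" using exists_k[OF q] by blast
  have En: "E (w1, w2) a \<ge> 0" if "w1 < m1" "w2 < m2" "length a = n" for w1 w2 a
    using Ep that by (simp add: msgs_def)
  have Es: "(\<Sum>a\<in>seqs n. E (w1, w2) a) = 1" if "w1 < m1" "w2 < m2" for w1 w2
    using Ep that by (simp add: msgs_def)
  have Ele: "E (w1, w2) a \<le> 1" if "w1 < m1" "w2 < m2" "length a = n" for w1 w2 a
  proof -
    have "E (w1, w2) a \<le> (\<Sum>a\<in>seqs n. E (w1, w2) a)"
      using that En by (intro member_le_sum) auto
    then show ?thesis using Es[OF that(1,2)] by simp
  qed
  define c1 where "c1 w1 a = (if w1 \<in> B then D1 a w1 else 0)" for w1 a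
  define c2 where "c2 w2 v = (if w2 \<in> B then D2 v w2 else 0)" for w2 v
  have D1n: "D1 a b \<ge> 0" if "length a = n" "b \<in> B" for a b using D1p that by simp
  have D2n: "D2 a b \<ge> 0" if "length a = n" "b \<in> B" for a b using D2p that by simp
  have D1s: "(\<Sum>b\<in>B. D1 a b) = 1" if "length a = n" for a using D1p that by simp
  have D2s: "(\<Sum>b\<in>B. D2 a b) = 1" if "length a = n" for a using D2p that by simp
  have c1n: "c1 w a \<ge> 0" if "length a = n" for w a using D1n[OF that] by (simp add: c1_def)
  have c2n: "c2 w a \<ge> 0" if "length a = n" for w a using D2n[OF that] by (simp add: c2_def)
  have sc1: "(\<Sum>w<m. c1 w a) \<le> 1" if "length a = n" for a m
  proof -
    have "(\<Sum>w<m. c1 w a) = (\<Sum>w\<in>{..<m} \<inter> B. D1 a w)" by (simp add: c1_def sum.inter_restrict)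
    also have "\<dots> \<le> (\<Sum>b\<in>B. D1 a b)" using fin D1n[OF that] by (intro sum_mono2) auto
    finally show ?thesis using D1s[OF that] by simp
  qed
  have sc2: "(\<Sum>w<m. c2 w a) \<le> 1" if "length a = n" for a m
  proof -
    have "(\<Sum>w<m. c2 w a) = (\<Sum>w\<in>{..<m} \<inter> B. D2 a w)" by (simp add: c2_def sum.inter_restrict)
    also have "\<dots> \<le> (\<Sum>b\<in>B. D2 a b)" using fin D2n[OF that] by (intro sum_mono2) auto
    finally show ?thesis using D2s[OF that] by simp
  qed
  have c1le: "c1 w a \<le> 1" if "length a = n" for w a
    using sc1[OF that, of "Suc w"] c1n[OF that] sum_nonneg[of "{..<w}" "\<lambda>w. c1 w a"]
    by (simp add: c1n[OF that])
  have c2le: "c2 w a \<le> 1" if "length a = n" for w a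
    using sc2[OF that, of "Suc w"] c2n[OF that] sum_nonneg[of "{..<w}" "\<lambda>w. c2 w a"]
    by (simp add: c2n[OF that])
  define cc where "cc = (1 / (real CARD('a) - 1)) ^ n"
  have ccg: "cc * real (card (gam n :: 'a list set)) = 1" unfolding cc_def by (rule c_gam[OF q])
  define p where "p w2 a = (\<Sum>w1<m1. E (w1, w2) a) / real m1" for w2 a
  define eps where "eps w2 = (\<Sum>w1<m1. \<Sum>a\<in>seqs n. E (w1, w2) a * (1 - c1 w1 a)) / real m1" for w2
  define X where "X = (\<Sum>w2<m2. \<Sum>G\<in>gam n. \<Sum>a\<in>seqs n. p w2 a * c2 w2 (obs G a))"
  have err1v: "err1 bc_chan n m1 m2 B P = (\<Sum>w2<m2. eps w2) / real m2"
  proof -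
    have inner: "cc * (\<Sum>G\<in>gam n. \<Sum>b1\<in>B. \<Sum>b2\<in>B. if b1 \<noteq> w1 then P (w1, w2) a (obs G a) a b1 b2 else 0)
       = E (w1, w2) a * (1 - c1 w1 a)" if a: "a \<in> seqs n" for w1 w2 a
    proof -
      have G1: "(\<Sum>b1\<in>B. \<Sum>b2\<in>B. if b1 \<noteq> w1 then P (w1, w2) a (obs G a) a b1 b2 else 0)
          = E (w1, w2) a * (1 - c1 w1 a)" if G: "G \<in> gam n" for G
      proof -
        have "(\<Sum>b1\<in>B. \<Sum>b2\<in>B. if b1 \<noteq> w1 then P (w1, w2) a (obs G a) a b1 b2 else 0) =
          (\<Sum>b1\<in>B. \<Sum>b2\<in>B. E (w1, w2) a * ((if b1 \<noteq> w1 then D1 a b1 else 0) * D2 (obs G a) b2))"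
          by (intro sum.cong refl) (simp add: Pe)
        also have "\<dots> = E (w1, w2) a * (\<Sum>b1\<in>B. \<Sum>b2\<in>B. (if b1 \<noteq> w1 then D1 a b1 else 0) * D2 (obs G a) b2)"
          by (simp only: sum_distrib_left)
        also have "\<dots> = E (w1, w2) a * ((\<Sum>b1\<in>B. if b1 \<noteq> w1 then D1 a b1 else 0) * (\<Sum>b2\<in>B. D2 (obs G a) b2))"
          by (simp only: sum_product)
        also have "(\<Sum>b2\<in>B. D2 (obs G a) b2) = 1" using G by (intro D2s) (simp add: gam_def)
        also have "(\<Sum>b1\<in>B. if b1 \<noteq> w1 then D1 a b1 else 0) = 1 - c1 w1 a"
          using sum_if_neq[OF fin, of w1 "D1 a"] D1s a by (simp add: c1_def)
        finally show ?thesis by simp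
      qed
      have "cc * (\<Sum>G\<in>gam n. \<Sum>b1\<in>B. \<Sum>b2\<in>B. if b1 \<noteq> w1 then P (w1, w2) a (obs G a) a b1 b2 else 0)
         = cc * (\<Sum>G\<in>(gam n :: 'a list set). E (w1, w2) a * (1 - c1 w1 a))"
        using G1 by simp
      also have "\<dots> = (cc * real (card (gam n :: 'a list set))) * (E (w1, w2) a * (1 - c1 w1 a))"
        by (simp add: mult.assoc)
      finally show ?thesis using ccg by simp
    qed
    have "err1 bc_chan n m1 m2 B P = (\<Sum>w1<m1. \<Sum>w2<m2. \<Sum>a\<in>seqs n. E (w1, w2) a * (1 - c1 w1 a)) / (real m1 * real m2)"
      unfolding err1_eq cc_def[symmetric] using inner by (intro arg_cong2[where f="(/)"] sum.cong refl) auto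
    also have "\<dots> = (\<Sum>w2<m2. \<Sum>w1<m1. \<Sum>a\<in>seqs n. E (w1, w2) a * (1 - c1 w1 a)) / (real m1 * real m2)"
      by (subst sum.swap) (rule refl)
    also have "\<dots> = (\<Sum>w2<m2. eps w2) / real m2"
      unfolding eps_def using m by (simp add: sum_divide_distrib[symmetric] field_simps)
    finally show ?thesis .
  qed
  have err2v: "err2 bc_chan n m1 m2 B P = 1 - cc * X / real m2"
  proof -
    have inner: "cc * (\<Sum>G\<in>gam n. \<Sum>b1\<in>B. \<Sum>b2\<in>B. if b2 \<noteq> w2 then P (w1, w2) a (obs G a) a b1 b2 else 0)
       = E (w1, w2) a - cc * (\<Sum>G\<in>gam n. E (w1, w2) a * c2 w2 (obs G a))" if a: "a \<in> seqs n" for w1 w2 a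
    proof -
      have G1: "(\<Sum>b1\<in>B. \<Sum>b2\<in>B. if b2 \<noteq> w2 then P (w1, w2) a (obs G a) a b1 b2 else 0)
          = E (w1, w2) a - E (w1, w2) a * c2 w2 (obs G a)" if G: "G \<in> gam n" for G
      proof -
        have lo: "length (obs G a) = n" using G by (simp add: gam_def)
        have "(\<Sum>b1\<in>B. \<Sum>b2\<in>B. if b2 \<noteq> w2 then P (w1, w2) a (obs G a) a b1 b2 else 0) =
          (\<Sum>b1\<in>B. \<Sum>b2\<in>B. E (w1, w2) a * (D1 a b1 * (if b2 \<noteq> w2 then D2 (obs G a) b2 else 0)))"
          by (intro sum.cong refl) (simp add: Pe)
        also have "\<dots> = E (w1, w2) a * (\<Sum>b1\<in>B. \<Sum>b2\<in>B. D1 a b1 * (if b2 \<noteq> w2 then D2 (obs G a) b2 else 0))"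
          by (simp only: sum_distrib_left)
        also have "\<dots> = E (w1, w2) a * ((\<Sum>b1\<in>B. D1 a b1) * (\<Sum>b2\<in>B. if b2 \<noteq> w2 then D2 (obs G a) b2 else 0))"
          by (simp only: sum_product)
        also have "(\<Sum>b1\<in>B. D1 a b1) = 1" using a by (intro D1s) simp
        also have "(\<Sum>b2\<in>B. if b2 \<noteq> w2 then D2 (obs G a) b2 else 0) = 1 - c2 w2 (obs G a)"
          using sum_if_neq[OF fin, of w2 "D2 (obs G a)"] D2s[OF lo] by (simp add: c2_def)
        finally show ?thesis by (simp add: algebra_simps)
      qed
      have "cc * (\<Sum>G\<in>gam n. \<Sum>b1\<in>B. \<Sum>b2\<in>B. if b2 \<noteq> w2 then P (w1, w2) a (obs G a) a b1 b2 else 0)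
         = cc * (\<Sum>G\<in>(gam n :: 'a list set). E (w1, w2) a - E (w1, w2) a * c2 w2 (obs G a))"
        using G1 by simp
      also have "\<dots> = (cc * real (card (gam n :: 'a list set))) * E (w1, w2) a
          - cc * (\<Sum>G\<in>gam n. E (w1, w2) a * c2 w2 (obs G a))"
        by (simp add: sum_subtractf right_diff_distrib mult.assoc)
      finally show ?thesis using ccg by simp
    qed
    define Y where "Y = (\<Sum>w1<m1. \<Sum>w2<m2. \<Sum>a\<in>seqs n. \<Sum>G\<in>gam n. E (w1, w2) a * c2 w2 (obs G a))"
    have XY: "real m1 * X = Y"
    proof -
      have "real m1 * X = (\<Sum>w2<m2. \<Sum>G\<in>gam n. \<Sum>a\<in>seqs n. (\<Sum>w1<m1. E (w1, w2) a) * c2 w2 (obs G a))"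
        unfolding X_def p_def using m by (simp add: sum_distrib_left)
      also have "\<dots> = (\<Sum>w2<m2. \<Sum>G\<in>gam n. \<Sum>a\<in>seqs n. \<Sum>w1<m1. E (w1, w2) a * c2 w2 (obs G a))"
        by (simp add: sum_distrib_right)
      also have "\<dots> = (\<Sum>w2<m2. \<Sum>w1<m1. \<Sum>a\<in>seqs n. \<Sum>G\<in>gam n. E (w1, w2) a * c2 w2 (obs G a))"
      proof (intro sum.cong refl)
        fix w2
        have "(\<Sum>G\<in>(gam n::'a list set). \<Sum>a\<in>seqs n. \<Sum>w1<m1. E (w1, w2) a * c2 w2 (obs G a)) =
              (\<Sum>a\<in>seqs n. \<Sum>G\<in>(gam n::'a list set). \<Sum>w1<m1. E (w1, w2) a * c2 w2 (obs G a))"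
          by (rule sum.swap)
        also have "\<dots> = (\<Sum>a\<in>seqs n. \<Sum>w1<m1. \<Sum>G\<in>(gam n::'a list set). E (w1, w2) a * c2 w2 (obs G a))"
          by (intro sum.cong refl sum.swap)
        also have "\<dots> = (\<Sum>w1<m1. \<Sum>a\<in>seqs n. \<Sum>G\<in>(gam n::'a list set). E (w1, w2) a * c2 w2 (obs G a))"
          by (rule sum.swap)
        finally show "(\<Sum>G\<in>(gam n::'a list set). \<Sum>a\<in>seqs n. \<Sum>w1<m1. E (w1, w2) a * c2 w2 (obs G a)) =
              (\<Sum>w1<m1. \<Sum>a\<in>seqs n. \<Sum>G\<in>(gam n::'a list set). E (w1, w2) a * c2 w2 (obs G a))" .
      qed
      also have "\<dots> = Y" unfolding Y_def by (rule sum.swap)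
      finally show ?thesis .
    qed
    have "err2 bc_chan n m1 m2 B P = (\<Sum>w1<m1. \<Sum>w2<m2. \<Sum>a\<in>seqs n.
        E (w1, w2) a - cc * (\<Sum>G\<in>gam n. E (w1, w2) a * c2 w2 (obs G a))) / (real m1 * real m2)"
      unfolding err2_eq cc_def[symmetric] using inner by (intro arg_cong2[where f="(/)"] sum.cong refl) auto
    also have "\<dots> = (\<Sum>w1<m1. \<Sum>w2<m2. 1 - cc * (\<Sum>a\<in>seqs n. \<Sum>G\<in>gam n. E (w1, w2) a * c2 w2 (obs G a))) / (real m1 * real m2)"
      using Es by (intro arg_cong2[where f="(/)"] sum.cong refl) (simp add: sum_subtractf sum_distrib_left)
    also have "\<dots> = (real m1 * real m2 - cc * Y) / (real m1 * real m2)"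
      unfolding Y_def by (simp add: sum_subtractf sum_distrib_left)
    also have "\<dots> = 1 - cc * X / real m2"
      using m XY[symmetric] by (simp add: field_simps)
    finally show ?thesis .
  qed
  have core: "(\<Sum>G\<in>gam n. \<Sum>a\<in>seqs n. p w2 a * c2 w2 (obs G a)) \<le>
     real (card (gam n :: 'a list set)) * ((1 + 1 / (l^2 * real m1) + eps w2) / 2)
     + l * (\<Sum>G\<in>gam n. \<Sum>y\<in>seqs n. c2 w2 (oy y G))" if w2: "w2 < m2" for w2
  proof -
    have pn: "p w2 a \<ge> 0" if "length a = n" for a
      unfolding p_def using En[OF _ w2 that] by (intro divide_nonneg_nonneg sum_nonneg) auto
    have ps: "(\<Sum>a\<in>seqs n. p w2 a) = 1"
    proof -
      have "(\<Sum>a\<in>seqs n. p w2 a) = (\<Sum>w1<m1. \<Sum>a\<in>seqs n. E (w1, w2) a) / real m1"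
        unfolding p_def by (simp add: sum_divide_distrib[symmetric] sum.swap[of _ "seqs n"])
      also have "\<dots> = 1" using Es[OF _ w2] m by simp
      finally show ?thesis .
    qed
    have part_i: "(\<Sum>a\<in>seqs n. p w2 a * c2 w2 (obs G a)) \<le> Aw (p w2) l G + l * (\<Sum>y\<in>seqs n. c2 w2 (oy y G))"
      if G: "G \<in> gam n" for G
    proof -
      have lG: "length G = n" using G by (simp add: gam_def)
      define H where "H = Hs (p w2) l G"
      have "(\<Sum>a\<in>seqs n. p w2 a * c2 w2 (obs G a)) =
          (\<Sum>a\<in>seqs n. if piG G a \<in> H then p w2 a * c2 w2 (obs G a) else 0) +
          (\<Sum>a\<in>seqs n. if piG G a \<in> H then 0 else p w2 a * c2 w2 (oy (piG G a) G))"
        unfolding sum.distrib[symmetric] by (intro sum.cong refl) (simp add: obs_oy)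
      also have "(\<Sum>a\<in>seqs n. if piG G a \<in> H then p w2 a * c2 w2 (obs G a) else 0) \<le>
          (\<Sum>a\<in>seqs n. if piG G a \<in> H then p w2 a else 0)"
      proof (intro sum_mono)
        fix a :: "('a \<times> 'a) list" assume a: "a \<in> seqs n"
        have "p w2 a * c2 w2 (obs G a) \<le> p w2 a * 1"
          using pn[of a] c2le[of "obs G a"] a lG by (intro mult_left_mono) auto
        then show "(if piG G a \<in> H then p w2 a * c2 w2 (obs G a) else 0) \<le> (if piG G a \<in> H then p w2 a else 0)"
          by simp
      qed
      also have "(\<Sum>a\<in>seqs n. if piG G a \<in> H then p w2 a else 0) = Aw (p w2) l G"
        unfolding Aw_def H_def lG ..
      also have "(\<Sum>a\<in>seqs n. if piG G a \<in> H then 0 else p w2 a * c2 w2 (oy (piG G a) G)) =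
          (\<Sum>y\<in>piG G ` seqs n. \<Sum>a\<in>{a. a \<in> seqs n \<and> piG G a = y}. if y \<in> H then 0 else p w2 a * c2 w2 (oy y G))"
        by (subst sum.image_gen[OF finite_seqs, where g="piG G"]) (intro sum.cong refl, auto)
      also have "\<dots> = (\<Sum>y\<in>piG G ` seqs n. if y \<in> H then 0 else Qg (p w2) G y * c2 w2 (oy y G))"
        unfolding Qg_def lG by (intro sum.cong refl) (simp add: sum_distrib_right)
      also have "\<dots> \<le> (\<Sum>y\<in>piG G ` seqs n. l * c2 w2 (oy y G))"
      proof (intro sum_mono)
        fix y assume y: "y \<in> piG G ` seqs n"
        have c2y: "c2 w2 (oy y G) \<ge> 0" using lG by (intro c2n) simp
        show "(if y \<in> H then 0 else Qg (p w2) G y * c2 w2 (oy y G)) \<le> l * c2 w2 (oy y G)"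
        proof (cases "y \<in> H")
          case True then show ?thesis using l c2y by simp
        next
          case False
          then have "Qg (p w2) G y \<le> l" using y lG by (auto simp: H_def Hs_def)
          then show ?thesis using False c2y by (simp add: mult_right_mono)
        qed
      qed
      also have "\<dots> \<le> (\<Sum>y\<in>seqs n. l * c2 w2 (oy y G))"
        using l lG by (intro sum_mono2 mult_nonneg_nonneg c2n) (auto simp: piG_def)
      finally show ?thesis by (simp add: sum_distrib_left)
    qed
    have part_iii: "Aw (p w2) l G + Aw (p w2) l (map ((*) k) G) \<le> 1 + 1 / (l^2 * real m1) + eps w2"
      if G: "G \<in> gam n" for G
    proof -
      have lG: "length G = n" using G by (simp add: gam_def)
      define Sc where "Sc a = (piG G a \<in> Hs (p w2) l G \<and> piG (map ((*) k) G) a \<in> Hs (p w2) l (map ((*) k) G))" for a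
      have "Aw (p w2) l G + Aw (p w2) l (map ((*) k) G) \<le> 1 + (\<Sum>a\<in>seqs n. if Sc a then p w2 a else 0)"
        using Aw_pair[of G "p w2" "map ((*) k) G" l] pn ps lG unfolding Sc_def by simp
      also have "(\<Sum>a\<in>seqs n. if Sc a then p w2 a else 0) \<le> real (card {a \<in> seqs n. Sc a}) / real m1 + eps w2"
      proof -
        have pt: "(\<Sum>w1<m1. if Sc a then E (w1, w2) a else 0) \<le>
             (if Sc a then 1 else 0) + (\<Sum>w1<m1. E (w1, w2) a * (1 - c1 w1 a))" if a: "a \<in> seqs n" for a
        proof -
          have nn: "(\<Sum>w1<m1. E (w1, w2) a * (1 - c1 w1 a)) \<ge> 0"
            using En[OF _ w2] c1le a by (intro sum_nonneg mult_nonneg_nonneg) auto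
          show ?thesis
          proof (cases "Sc a")
            case False then show ?thesis using nn by simp
          next
            case True
            have "(\<Sum>w1<m1. E (w1, w2) a * c1 w1 a) \<le> (\<Sum>w1<m1. c1 w1 a)"
              using Ele[OF _ w2] c1n a by (intro sum_mono mult_left_le_one_le En[OF _ w2]) auto
            also have "\<dots> \<le> 1" using sc1 a by simp
            finally have "(\<Sum>w1<m1. E (w1, w2) a * c1 w1 a) \<le> 1" .
            moreover have "(\<Sum>w1<m1. E (w1, w2) a) = (\<Sum>w1<m1. E (w1, w2) a * c1 w1 a) + (\<Sum>w1<m1. E (w1, w2) a * (1 - c1 w1 a))"
              by (simp add: sum.distrib[symmetric] algebra_simps)
            ultimately show ?thesis using True by simp
          qed
        qed
        have "(\<Sum>a\<in>seqs n. if Sc a then p w2 a else 0) = (\<Sum>a\<in>seqs n. \<Sum>w1<m1. if Sc a then E (w1, w2) a else 0) / real m1"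
          unfolding p_def sum_divide_distrib by (intro sum.cong refl) auto
        also have "\<dots> \<le> (\<Sum>a\<in>seqs n. (if Sc a then 1 else 0) + (\<Sum>w1<m1. E (w1, w2) a * (1 - c1 w1 a))) / real m1"
          using m by (intro divide_right_mono sum_mono pt) auto
        also have "\<dots> = (real (card {a \<in> seqs n. Sc a}) + real m1 * eps w2) / real m1"
          unfolding sum.distrib eps_def using m
          by (simp add: sum.If_cases sum.swap[of _ "seqs n"] Int_def)
        also have "\<dots> = real (card {a \<in> seqs n. Sc a}) / real m1 + eps w2"
          using m by (simp add: field_simps)
        finally show ?thesis .
      qed
      also have "real (card {a \<in> seqs n. Sc a}) \<le> 1 / l^2"
      proof -
        have "card {a \<in> seqs n. Sc a} \<le> card (Hs (p w2) l G) * card (Hs (p w2) l (map ((*) k) G))"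
          unfolding Sc_def by (rule card_S[OF k G])
        then have "real (card {a \<in> seqs n. Sc a}) \<le> real (card (Hs (p w2) l G)) * real (card (Hs (p w2) l (map ((*) k) G)))"
          by (metis of_nat_le_iff of_nat_mult)
        also have "\<dots> \<le> (1 / l) * (1 / l)"
          using pn ps lG l by (intro mult_mono card_Hs) auto
        finally show ?thesis by (simp add: power2_eq_square)
      qed
      then have "real (card {a \<in> seqs n. Sc a}) / real m1 \<le> 1 / l^2 / real m1"
        using m by (intro divide_right_mono) auto
      finally show ?thesis by simp
    qed
    have "2 * (\<Sum>G\<in>gam n. Aw (p w2) l G) = (\<Sum>G\<in>gam n. Aw (p w2) l G + Aw (p w2) l (map ((*) k) G))"
      using sum_gam_scale[OF k(1), of "Aw (p w2) l" n] by (simp add: sum.distrib)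
    also have "\<dots> \<le> (\<Sum>G\<in>(gam n :: 'a list set). 1 + 1 / (l^2 * real m1) + eps w2)"
      by (intro sum_mono part_iii)
    finally have A2: "(\<Sum>G\<in>gam n. Aw (p w2) l G) \<le> real (card (gam n :: 'a list set)) * ((1 + 1 / (l^2 * real m1) + eps w2) / 2)"
      by simp
    have "(\<Sum>G\<in>gam n. \<Sum>a\<in>seqs n. p w2 a * c2 w2 (obs G a)) \<le>
        (\<Sum>G\<in>gam n. Aw (p w2) l G + l * (\<Sum>y\<in>seqs n. c2 w2 (oy y G)))"
      by (intro sum_mono part_i)
    also have "\<dots> = (\<Sum>G\<in>gam n. Aw (p w2) l G) + l * (\<Sum>G\<in>gam n. \<Sum>y\<in>seqs n. c2 w2 (oy y G))"
      by (simp add: sum.distrib sum_distrib_left)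
    finally show ?thesis using A2 by linarith
  qed
  have "X \<le> (\<Sum>w2<m2. real (card (gam n :: 'a list set)) * ((1 + 1 / (l^2 * real m1) + eps w2) / 2))
     + l * (\<Sum>G\<in>gam n. \<Sum>y\<in>seqs n. \<Sum>w2<m2. c2 w2 (oy y G))"
  proof -
    have "X \<le> (\<Sum>w2<m2. real (card (gam n :: 'a list set)) * ((1 + 1 / (l^2 * real m1) + eps w2) / 2)
     + l * (\<Sum>G\<in>gam n. \<Sum>y\<in>seqs n. c2 w2 (oy y G)))"
      unfolding X_def by (intro sum_mono core) auto
    also have "\<dots> = (\<Sum>w2<m2. real (card (gam n :: 'a list set)) * ((1 + 1 / (l^2 * real m1) + eps w2) / 2))
     + l * (\<Sum>G\<in>gam n. \<Sum>y\<in>seqs n. \<Sum>w2<m2. c2 w2 (oy y G))"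
    proof -
      have sw: "(\<Sum>w2<m2. \<Sum>G\<in>gam n. \<Sum>y\<in>seqs n. c2 w2 (oy y G)) = (\<Sum>G\<in>(gam n :: 'a list set). \<Sum>y\<in>seqs n. \<Sum>w2<m2. c2 w2 (oy y G))"
        by (subst sum.swap) (intro sum.cong refl, rule sum.swap)
      show ?thesis unfolding sum.distrib sum_distrib_left[symmetric] sw ..
    qed
    finally show ?thesis .
  qed
  also have "\<dots> \<le> (\<Sum>w2<m2. real (card (gam n :: 'a list set)) * ((1 + 1 / (l^2 * real m1) + eps w2) / 2))
     + l * (\<Sum>G\<in>(gam n :: 'a list set). \<Sum>y\<in>(seqs n :: 'a list set). (1::real))"
    using l by (intro add_left_mono mult_left_mono sum_mono sc2) (auto simp: gam_def)
  finally have Xb: "X \<le> (\<Sum>w2<m2. real (card (gam n :: 'a list set)) * ((1 + 1 / (l^2 * real m1) + eps w2) / 2))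
     + l * (real (card (gam n :: 'a list set)) * real CARD('a) ^ n)"
    by (simp add: card_seqs)
  have cc0: "cc \<ge> 0" unfolding cc_def using q by simp
  have "cc * X \<le> cc * ((\<Sum>w2<m2. real (card (gam n :: 'a list set)) * ((1 + 1 / (l^2 * real m1) + eps w2) / 2))
     + l * (real (card (gam n :: 'a list set)) * real CARD('a) ^ n))"
    using Xb cc0 by (rule mult_left_mono)
  also have "\<dots> = (\<Sum>w2<m2. (1 + 1 / (l^2 * real m1) + eps w2) / 2) + l * real CARD('a) ^ n"
  proof -
    have "cc * (\<Sum>w2<m2. real (card (gam n :: 'a list set)) * ((1 + 1 / (l^2 * real m1) + eps w2) / 2))
       = (\<Sum>w2<m2. (cc * real (card (gam n :: 'a list set))) * ((1 + 1 / (l^2 * real m1) + eps w2) / 2))"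
      by (simp add: sum_distrib_left mult.assoc)
    moreover have "cc * (l * (real (card (gam n :: 'a list set)) * real CARD('a) ^ n)) =
       l * ((cc * real (card (gam n :: 'a list set))) * real CARD('a) ^ n)"
      by (simp add: mult.assoc mult.left_commute)
    ultimately show ?thesis using ccg by (simp add: distrib_left)
  qed
  also have "\<dots> = real m2 * ((1 + 1 / (l^2 * real m1)) / 2) + (\<Sum>w2<m2. eps w2) / 2 + l * real CARD('a) ^ n"
    by (simp add: sum.distrib add_divide_distrib sum_divide_distrib)
  finally have "cc * X / real m2 \<le> (real m2 * ((1 + 1 / (l^2 * real m1)) / 2) + (\<Sum>w2<m2. eps w2) / 2 + l * real CARD('a) ^ n) / real m2"
    using m by (intro divide_right_mono) auto
  also have "\<dots> = (1 + 1 / (l^2 * real m1) + (\<Sum>w2<m2. eps w2) / real m2) / 2 + l * real CARD('a) ^ n / real m2"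
    using m by (simp add: field_simps)
  finally show ?thesis using err1v err2v by simp
qed


lemma exists_enum:
  obtains phi :: "nat \<Rightarrow> 'b::finite list" where "bij_betw phi {..<CARD('b) ^ k} (seqs k)"
proof -
  have "\<exists>h. bij_betw h {..<CARD('b) ^ k} (seqs k :: 'b list set)"
    by (rule finite_same_card_bij) (simp_all add: card_seqs)
  then show ?thesis using that by blast
qed

lemma sum_pairs:
  fixes h :: "'a::finite list \<Rightarrow> 'b::finite list \<Rightarrow> real"
  shows "(\<Sum>a\<in>(seqs n :: ('a \<times> 'b) list set). h (map fst a) (map snd a)) =
         (\<Sum>x\<in>seqs n. \<Sum>r\<in>seqs n. h x r)"
proof -
  have bij: "bij_betw (\<lambda>(x, r). zip x r) (seqs n \<times> seqs n) (seqs n :: ('a \<times> 'b) list set)"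
  proof (rule bij_betw_byWitness[where f'="\<lambda>a. (map fst a, map snd a)"])
    show "\<forall>a\<in>seqs n \<times> seqs n. (\<lambda>a. (map fst a, map snd a)) ((\<lambda>(x, r). zip x r) a) = a"
      by auto
    show "\<forall>a'\<in>seqs n. (\<lambda>(x, r). zip x r) (map fst a', map snd a') = a'"
      by (simp add: zip_map_fst_snd)
    show "(\<lambda>(x, r). zip x r) ` (seqs n \<times> seqs n) \<subseteq> seqs n" by auto
    show "(\<lambda>a. (map fst a, map snd a)) ` seqs n \<subseteq> seqs n \<times> seqs n" by auto
  qed
  have "(\<Sum>a\<in>(seqs n :: ('a \<times> 'b) list set). h (map fst a) (map snd a)) =
        (\<Sum>p\<in>seqs n \<times> seqs n. h (map fst ((\<lambda>(x, r). zip x r) p)) (map snd ((\<lambda>(x, r). zip x r) p)))"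
    by (rule sum.reindex_bij_betw[OF bij, symmetric])
  also have "\<dots> = (\<Sum>p\<in>seqs n \<times> seqs n. h (fst p) (snd p))"
    by (intro sum.cong refl) auto
  also have "\<dots> = (\<Sum>x\<in>seqs n. \<Sum>r\<in>seqs n. h x r)"
    by (simp add: sum.cartesian_product case_prod_beta)
  finally show ?thesis .
qed

lemma ns_scheme:
  fixes phi :: "nat \<Rightarrow> 'a::{field,finite} list"
  assumes bij: "bij_betw phi {..<M} (seqs n)" and M: "M = CARD('a) ^ n"
  defines "psi \<equiv> inv_into {..<M} phi"
  defines "F \<equiv> \<lambda>(v2::('a\<times>'a) list) (r::'a list) (u::nat\<times>nat).
     map (\<lambda>i. fst (v2!i) - r!i + phi (snd u) ! i - snd (v2!i) * phi (fst u) ! i) [0..<n]"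
  defines "P \<equiv> \<lambda>u (v1::('a\<times>'a) list) (v2::('a\<times>'a) list) (a::('a\<times>'a) list) b1 b2.
     (if b1 = psi (map fst v1) then 1 else 0) *
     (if map fst a = phi (fst u) \<and> b2 = psi (F v2 (map snd a) u) then 1 / real M else (0::real))"
  shows "ns_box n M M {..<M} P \<and> err1 bc_chan n M M {..<M} P = 0 \<and> err2 bc_chan n M M {..<M} P = 0"
proof -
  have Mpos: "real M > 0" using M by simp
  have cardM: "real (card (seqs n :: 'a list set)) = real M" using M by (simp add: card_seqs)
  have bpsi: "bij_betw psi (seqs n) {..<M}" unfolding psi_def by (rule bij_betw_inv_into[OF bij])
  have psi_in: "psi x < M" if "length x = n" for x using bij_betwE[OF bpsi] that by simp
  have psi_phi: "psi (phi w) = w" if "w < M" for w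
    unfolding psi_def using bij that by (simp add: bij_betw_def inv_into_f_f)
  have phi_psi: "phi (psi x) = x" if "length x = n" for x
    unfolding psi_def using bij that by (simp add: bij_betw_inv_into_right)
  have phi_len: "length (phi w) = n" if "w < M" for w using bij_betwE[OF bij] that by simp
  have psi_eq: "psi x = b \<longleftrightarrow> x = phi b" if "length x = n" "b < M" for x b
    using psi_phi phi_psi that by metis
  have F_len[simp]: "length (F v2 r u) = n" for v2 r u by (simp add: F_def)
  define I1 where "I1 b1 (v1::('a\<times>'a) list) = (if b1 = psi (map fst v1) then 1 else (0::real))" for b1 v1
  define K where "K u (v2::('a\<times>'a) list) (a::('a\<times>'a) list) b2 = (if map fst a = phi (fst u) \<and> b2 = psi (F v2 (map snd a) u) then 1 / real M else (0::real))" for u v2 a b2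
  define Km where "Km (u::nat\<times>nat) (a::('a\<times>'a) list) = (if map fst a = phi (fst u) then 1 / real M else (0::real))" for u a
  have PIK: "P u v1 v2 a b1 b2 = I1 b1 v1 * K u v2 a b2" for u v1 v2 a b1 b2
    unfolding P_def I1_def K_def ..
  have S1: "(\<Sum>b1\<in>{..<M}. I1 b1 v1) = 1" if "length v1 = n" for v1
    unfolding I1_def using psi_in[of "map fst v1"] that by (simp add: sum.delta')
  have S2: "(\<Sum>b2\<in>{..<M}. K u v2 a b2) = Km u a" if "length a = n" for u v2 a
    unfolding K_def Km_def using psi_in[of "F v2 (map snd a) u"] that by (simp add: sum.delta')
  have S3: "(\<Sum>a\<in>seqs n. K u v2 a b2) = 1 / real M" if u: "fst u < M" "snd u < M" and b2: "b2 < M" for u v2 b2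
  proof -
    define r0 where "r0 = map (\<lambda>i. fst (v2!i) + phi (snd u) ! i - snd (v2!i) * phi (fst u) ! i - phi b2 ! i) [0..<n]"
    have key: "b2 = psi (F v2 r u) \<longleftrightarrow> r = r0" if r: "length r = n" for r
    proof -
      have "b2 = psi (F v2 r u) \<longleftrightarrow> F v2 r u = phi b2" using psi_eq[of "F v2 r u" b2] b2 by auto
      also have "\<dots> \<longleftrightarrow> r = r0"
      proof
        assume h: "F v2 r u = phi b2"
        show "r = r0"
        proof (rule nth_equalityI)
          show "length r = length r0" using r by (simp add: r0_def)
          fix i assume "i < length r"
          then have i: "i < n" using r by simp
          have "F v2 r u ! i = phi b2 ! i" using h by simp
          then show "r ! i = r0 ! i" using i by (simp add: F_def r0_def algebra_simps)
        qed
      next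
        assume h: "r = r0"
        show "F v2 r u = phi b2"
        proof (rule nth_equalityI)
          show "length (F v2 r u) = length (phi b2)" using phi_len[OF b2] by simp
          fix i assume "i < length (F v2 r u)"
          then have i: "i < n" by simp
          show "F v2 r u ! i = phi b2 ! i" using i h by (simp add: F_def r0_def algebra_simps)
        qed
      qed
      finally show ?thesis .
    qed
    have r0n: "r0 \<in> seqs n" by (simp add: r0_def)
    have "(\<Sum>a\<in>seqs n. K u v2 a b2) = (\<Sum>x\<in>seqs n. \<Sum>r\<in>seqs n.
        if x = phi (fst u) \<and> b2 = psi (F v2 r u) then 1 / real M else 0)"
      unfolding K_def by (rule sum_pairs[where h="\<lambda>x r. if x = phi (fst u) \<and> b2 = psi (F v2 r u) then 1 / real M else 0"])
    also have "\<dots> = (\<Sum>r\<in>seqs n. if b2 = psi (F v2 r u) then 1 / real M else 0)"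
    proof -
      have "(\<Sum>x\<in>seqs n. \<Sum>r\<in>seqs n. if x = phi (fst u) \<and> b2 = psi (F v2 r u) then 1 / real M else 0)
         = (\<Sum>x\<in>seqs n. if x = phi (fst u) then (\<Sum>r\<in>seqs n. if b2 = psi (F v2 r u) then 1 / real M else 0) else 0)"
        by (intro sum.cong refl) auto
      also have "\<dots> = (\<Sum>r\<in>seqs n. if b2 = psi (F v2 r u) then 1 / real M else 0)"
        using phi_len[OF u(1)] by (simp add: sum.delta')
      finally show ?thesis .
    qed
    also have "\<dots> = (\<Sum>r\<in>seqs n. if r = r0 then 1 / real M else 0)"
      using key by (intro sum.cong refl) auto
    also have "\<dots> = 1 / real M" using r0n by (simp add: sum.delta')
    finally show ?thesis .
  qed
  have S4: "(\<Sum>a\<in>seqs n. Km u a) = 1" if u: "fst u < M" for u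
  proof -
    have "(\<Sum>a\<in>seqs n. Km u a) = (\<Sum>x\<in>seqs n. \<Sum>r\<in>(seqs n :: 'a list set). if x = phi (fst u) then 1 / real M else 0)"
      unfolding Km_def by (rule sum_pairs[where h="\<lambda>x r. if x = phi (fst u) then 1 / real M else 0"])
    also have "\<dots> = (\<Sum>x\<in>seqs n. if x = phi (fst u) then real (card (seqs n :: 'a list set)) / real M else 0)"
      by (intro sum.cong refl) auto
    also have "\<dots> = real (card (seqs n :: 'a list set)) / real M"
      using phi_len[OF u] by (simp add: sum.delta')
    also have "\<dots> = 1" using cardM Mpos by simp
    finally show ?thesis .
  qed
  have E1: "(\<Sum>c\<in>{..<M}. P u v1 v2 a b1 c) = I1 b1 v1 * Km u a" if "length a = n" for u v1 v2 a b1
    unfolding PIK sum_distrib_left[symmetric] using S2 that by simp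
  have E2: "(\<Sum>c\<in>{..<M}. P u v1 v2 a c b2) = K u v2 a b2" if "length v1 = n" for u v1 v2 a b2
    unfolding PIK sum_distrib_right[symmetric] using S1 that by simp
  have E3: "(\<Sum>x\<in>seqs n. P u v1 v2 x b1 b2) = I1 b1 v1 / real M"
    if "fst u < M" "snd u < M" "b2 < M" for u v1 v2 b1 b2
    unfolding PIK sum_distrib_left[symmetric] using S3 that by simp
  have E4: "(\<Sum>c\<in>{..<M}. \<Sum>d\<in>{..<M}. P u v1 v2 a c d) = Km u a"
    if "length v1 = n" "length a = n" for u v1 v2 a
    unfolding PIK sum_distrib_left[symmetric] sum_distrib_right[symmetric] using S1 S2 that by simp
  have E5: "(\<Sum>x\<in>seqs n. \<Sum>d\<in>{..<M}. P u v1 v2 x b1 d) = I1 b1 v1"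
    if "fst u < M" for u v1 v2 b1
  proof -
    have "(\<Sum>x\<in>seqs n. \<Sum>d\<in>{..<M}. P u v1 v2 x b1 d) = (\<Sum>x\<in>seqs n. I1 b1 v1 * Km u x)"
      by (intro sum.cong refl) (simp add: PIK sum_distrib_left[symmetric] S2)
    also have "\<dots> = I1 b1 v1" unfolding sum_distrib_left[symmetric] using S4 that by simp
    finally show ?thesis .
  qed
  have E6: "(\<Sum>x\<in>seqs n. \<Sum>c\<in>{..<M}. P u v1 v2 x c b2) = 1 / real M"
    if "length v1 = n" "fst u < M" "snd u < M" "b2 < M" for u v1 v2 b2
  proof -
    have "(\<Sum>x\<in>seqs n. \<Sum>c\<in>{..<M}. P u v1 v2 x c b2) = (\<Sum>x\<in>seqs n. K u v2 x b2)"
      unfolding PIK sum_distrib_right[symmetric] using S1 that by simp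
    also have "\<dots> = 1 / real M" using S3 that by simp
    finally show ?thesis .
  qed
  have E0: "(\<Sum>a\<in>seqs n. \<Sum>b1\<in>{..<M}. \<Sum>b2\<in>{..<M}. P u v1 v2 a b1 b2) = 1"
    if "length v1 = n" "fst u < M" for u v1 v2
  proof -
    have "(\<Sum>a\<in>seqs n. \<Sum>b1\<in>{..<M}. \<Sum>b2\<in>{..<M}. P u v1 v2 a b1 b2) = (\<Sum>a\<in>seqs n. Km u a)"
      using E4 that by (intro sum.cong refl) auto
    also have "\<dots> = 1" using S4 that by simp
    finally show ?thesis .
  qed
  have Pn: "P u v1 v2 a b1 b2 \<ge> 0" for u v1 v2 a b1 b2 unfolding P_def using Mpos by simp
  have ns: "ns_box n M M {..<M} P"
    unfolding ns_box_def cond_pmf_box_def msgs_def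
    using E0 E1 E2 E3 E4 E5 E6 Pn by auto
  have z1: "(if b1 \<noteq> w1 then P (w1, w2) a (obs G a) a b1 b2 else 0) = 0"
    if "w1 < M" for w1 w2 a G b1 b2
    unfolding P_def using psi_phi[OF that] by auto
  have Fphi: "F (obs G a) (map snd a) (w1, w2) = phi w2"
    if "map fst a = phi w1" "length a = n" "length G = n" "w2 < M" for a G w1 w2
  proof (rule nth_equalityI)
    show "length (F (obs G a) (map snd a) (w1, w2)) = length (phi w2)" using phi_len that by simp
    fix i assume "i < length (F (obs G a) (map snd a) (w1, w2))"
    then have i: "i < n" by simp
    have "fst (a ! i) = phi w1 ! i" using arg_cong[OF that(1), of "\<lambda>l. l ! i"] i that(2) by simp
    then show "F (obs G a) (map snd a) (w1, w2) ! i = phi w2 ! i"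
      using i that by (simp add: F_def obs_def)
  qed
  have z2: "(if b2 \<noteq> w2 then P (w1, w2) a (obs G a) a b1 b2 else 0) = 0"
    if "w2 < M" "length a = n" "G \<in> gam n" for w1 w2 a G b1 b2
    unfolding P_def using psi_phi[OF that(1)] Fphi[of a w1 G w2] that by (auto simp: gam_def)
  have "err1 bc_chan n M M {..<M} P = 0"
    unfolding err1_eq using z1 by (simp add: sum.neutral)
  moreover have "err2 bc_chan n M M {..<M} P = 0"
    unfolding err2_eq using z2 by (simp add: sum.neutral)
  ultimately show ?thesis using ns by simp
qed


lemma ns_exists:
  "\<exists>P. ns_box n (CARD('a::{field,finite}) ^ n) (CARD('a) ^ n) {..<CARD('a) ^ n} P \<and>
     err1 (bc_chan :: ('a \<times> 'a, 'a \<times> 'a, 'a \<times> 'a) chan) n (CARD('a) ^ n) (CARD('a) ^ n) {..<CARD('a) ^ n} P = 0 \<and>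
     err2 (bc_chan :: ('a \<times> 'a, 'a \<times> 'a, 'a \<times> 'a) chan) n (CARD('a) ^ n) (CARD('a) ^ n) {..<CARD('a) ^ n} P = 0"
proof -
  obtain phi :: "nat \<Rightarrow> 'a list" where "bij_betw phi {..<CARD('a) ^ n} (seqs n)" by (rule exists_enum)
  from ns_scheme[OF this refl] show ?thesis by blast
qed

lemma cl_scheme:
  fixes phi1 :: "nat \<Rightarrow> ('a::{field,finite} \<times> 'a) list" and phi2 :: "nat \<Rightarrow> 'a list"
  assumes b1: "bij_betw phi1 {..<M1} (seqs k)" and b2: "bij_betw phi2 {..<M2} (seqs k)"
    and M21: "M2 \<le> M1" and kn: "2 * k \<le> n"
  defines "psi1 \<equiv> inv_into {..<M1} phi1"
  defines "psi2 \<equiv> inv_into {..<M2} phi2"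
  defines "enc \<equiv> \<lambda>u::nat\<times>nat. phi1 (fst u) @ map (\<lambda>s. (0, s)) (phi2 (snd u)) @ replicate (n - 2 * k) (0, 0)"
  defines "P \<equiv> \<lambda>u (v1::('a\<times>'a) list) (v2::('a\<times>'a) list) (a::('a\<times>'a) list) b1 b2.
     (if a = enc u then 1 else 0) * (if b1 = psi1 (take k v1) then 1 else 0) *
     (if b2 = psi2 (map (\<lambda>i. fst (v2 ! (k + i))) [0..<k]) then 1 else (0::real))"
  shows "classical_box n M1 M2 {..<M1} P \<and> err1 bc_chan n M1 M2 {..<M1} P = 0 \<and> err2 bc_chan n M1 M2 {..<M1} P = 0"
proof -
  have bpsi1: "bij_betw psi1 (seqs k) {..<M1}" unfolding psi1_def by (rule bij_betw_inv_into[OF b1])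
  have bpsi2: "bij_betw psi2 (seqs k) {..<M2}" unfolding psi2_def by (rule bij_betw_inv_into[OF b2])
  have psi1_in: "psi1 x < M1" if "length x = k" for x using bij_betwE[OF bpsi1] that by simp
  have psi2_in: "psi2 x < M2" if "length x = k" for x using bij_betwE[OF bpsi2] that by simp
  have psi1_phi: "psi1 (phi1 w) = w" if "w < M1" for w
    unfolding psi1_def using b1 that by (simp add: bij_betw_def inv_into_f_f)
  have psi2_phi: "psi2 (phi2 w) = w" if "w < M2" for w
    unfolding psi2_def using b2 that by (simp add: bij_betw_def inv_into_f_f)
  have phi1_len: "length (phi1 w) = k" if "w < M1" for w using bij_betwE[OF b1] that by simp
  have phi2_len: "length (phi2 w) = k" if "w < M2" for w using bij_betwE[OF b2] that by simp
  have enc_len: "length (enc u) = n" if "fst u < M1" "snd u < M2" for u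
    unfolding enc_def using phi1_len[OF that(1)] phi2_len[OF that(2)] kn by simp
  define E where "E u (a::('a\<times>'a) list) = (if a = enc u then 1 else (0::real))" for u a
  define D1 where "D1 (v::('a\<times>'a) list) b = (if b = psi1 (take k v) then 1 else (0::real))" for v b
  define D2 where "D2 (v::('a\<times>'a) list) b = (if b = psi2 (map (\<lambda>i. fst (v ! (k + i))) [0..<k]) then 1 else (0::real))" for v b
  have hE: "\<forall>u\<in>msgs M1 M2. (\<forall>a\<in>seqs n. 0 \<le> E u a) \<and> (\<Sum>a\<in>seqs n. E u a) = 1"
    using enc_len by (auto simp: E_def msgs_def sum.delta')
  have hD1: "\<forall>v\<in>seqs n. (\<forall>b\<in>{..<M1}. 0 \<le> D1 v b) \<and> (\<Sum>b\<in>{..<M1}. D1 v b) = 1"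
    using psi1_in kn by (auto simp: D1_def sum.delta')
  have hD2: "\<forall>v\<in>seqs n. (\<forall>b\<in>{..<M1}. 0 \<le> D2 v b) \<and> (\<Sum>b\<in>{..<M1}. D2 v b) = 1"
  proof
    fix v :: "('a \<times> 'a) list"
    have "psi2 (map (\<lambda>i. fst (v ! (k + i))) [0..<k]) < M1"
      using psi2_in[of "map (\<lambda>i. fst (v ! (k + i))) [0..<k]"] M21 by simp
    then show "(\<forall>b\<in>{..<M1}. 0 \<le> D2 v b) \<and> (\<Sum>b\<in>{..<M1}. D2 v b) = 1"
      by (simp add: D2_def sum.delta')
  qed
  have hP: "\<forall>u v1 v2 a b1 b2. P u v1 v2 a b1 b2 = E u a * D1 v1 b1 * D2 v2 b2"
    by (simp add: P_def E_def D1_def D2_def)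
  have cb: "classical_box n M1 M2 {..<M1} P"
    unfolding classical_box_def using hE hD1 hD2 hP by blast
  have z1: "(if b1 \<noteq> w1 then P (w1, w2) a (obs G a) a b1 b2 else 0) = 0"
    if "w1 < M1" "w2 < M2" for w1 w2 a G b1 b2
  proof -
    have "take k (enc (w1, w2)) = phi1 w1" unfolding enc_def using phi1_len[OF that(1)] by simp
    then show ?thesis unfolding P_def using psi1_phi[OF that(1)] by auto
  qed
  have dec2: "map (\<lambda>i. fst (obs G (enc (w1, w2)) ! (k + i))) [0..<k] = phi2 w2"
    if "w1 < M1" "w2 < M2" "length G = n" for w1 w2 G
  proof (rule nth_equalityI)
    show "length (map (\<lambda>i. fst (obs G (enc (w1, w2)) ! (k + i))) [0..<k]) = length (phi2 w2)"
      using phi2_len[OF that(2)] by simp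
    fix i assume "i < length (map (\<lambda>i. fst (obs G (enc (w1, w2)) ! (k + i))) [0..<k])"
    then have i: "i < k" by simp
    have ki: "k + i < n" using i kn by simp
    have "enc (w1, w2) ! (k + i) = (0, phi2 w2 ! i)"
      unfolding enc_def using phi1_len[OF that(1)] phi2_len[OF that(2)] i by (simp add: nth_append)
    then show "map (\<lambda>i. fst (obs G (enc (w1, w2)) ! (k + i))) [0..<k] ! i = phi2 w2 ! i"
      using i ki that(3) by (simp add: obs_def)
  qed
  have z2: "(if b2 \<noteq> w2 then P (w1, w2) a (obs G a) a b1 b2 else 0) = 0"
    if "w1 < M1" "w2 < M2" "G \<in> gam n" for w1 w2 a G b1 b2
    unfolding P_def using psi2_phi[OF that(2)] dec2[OF that(1,2)] that(3) by (auto simp: gam_def)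
  have "err1 bc_chan n M1 M2 {..<M1} P = 0"
    unfolding err1_eq using z1 by (simp add: sum.neutral)
  moreover have "err2 bc_chan n M1 M2 {..<M1} P = 0"
    unfolding err2_eq using z2 by (simp add: sum.neutral)
  ultimately show ?thesis using cb by simp
qed

lemma cl_exists:
  "\<exists>P. classical_box n (CARD('a::{field,finite}) ^ (2 * (n div 2))) (CARD('a) ^ (n div 2)) {..<CARD('a) ^ (2 * (n div 2))} P \<and>
     err1 (bc_chan :: ('a \<times> 'a, 'a \<times> 'a, 'a \<times> 'a) chan) n (CARD('a) ^ (2 * (n div 2))) (CARD('a) ^ (n div 2)) {..<CARD('a) ^ (2 * (n div 2))} P = 0 \<and>
     err2 (bc_chan :: ('a \<times> 'a, 'a \<times> 'a, 'a \<times> 'a) chan) n (CARD('a) ^ (2 * (n div 2))) (CARD('a) ^ (n div 2)) {..<CARD('a) ^ (2 * (n div 2))} P = 0"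
proof -
  obtain phi1 :: "nat \<Rightarrow> ('a \<times> 'a) list" where b1: "bij_betw phi1 {..<CARD('a \<times> 'a) ^ (n div 2)} (seqs (n div 2))"
    by (rule exists_enum)
  obtain phi2 :: "nat \<Rightarrow> 'a list" where b2: "bij_betw phi2 {..<CARD('a) ^ (n div 2)} (seqs (n div 2))"
    by (rule exists_enum)
  have e: "CARD('a \<times> 'a) ^ (n div 2) = CARD('a) ^ (2 * (n div 2))"
    by (simp add: power_mult mult.commute power2_eq_square)
  have le: "CARD('a) ^ (n div 2) \<le> CARD('a) ^ (2 * (n div 2))"
    by (rule power_increasing) simp_all
  show ?thesis using cl_scheme[OF b1[unfolded e] b2 le, of n] by auto
qed


lemma half_lim: "(\<lambda>n. real (n div 2) / real n) \<longlonglongrightarrow> 1 / 2"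
proof (rule tendsto_sandwich)
  show "eventually (\<lambda>n. 1 / 2 - 1 / (2 * real n) \<le> real (n div 2) / real n) sequentially"
    using eventually_ge_at_top[of "1::nat"]
  proof eventually_elim
    case (elim n)
    have h: "real n \<le> 2 * real (n div 2) + 1" by linarith
    have "real (n div 2) / real n - (1 / 2 - 1 / (2 * real n)) = (2 * real (n div 2) - real n + 1) / (2 * real n)"
      using elim by (simp add: field_simps)
    moreover have "(2 * real (n div 2) - real n + 1) / (2 * real n) \<ge> 0"
      using h by (intro divide_nonneg_nonneg) auto
    ultimately show ?case by linarith
  qed
  show "eventually (\<lambda>n. real (n div 2) / real n \<le> 1 / 2) sequentially"
    using eventually_ge_at_top[of "1::nat"]
  proof eventually_elim
    case (elim n)
    have "2 * real (n div 2) \<le> real n" by linarith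
    then show ?case using elim by (simp add: field_simps)
  qed
  show "(\<lambda>n. 1 / 2 - 1 / (2 * real n)) \<longlonglongrightarrow> 1 / 2" by real_asymp
  show "(\<lambda>n. 1 / 2 :: real) \<longlonglongrightarrow> 1 / 2" by simp
qed

lemma rate_lim:
  assumes "(\<lambda>n. real (f n) / real n) \<longlonglongrightarrow> c" and "CARD('a::finite) > 0"
  shows "(\<lambda>n. log 2 (real (CARD('a) ^ f n)) / real n) \<longlonglongrightarrow> c * log 2 (real CARD('a))"
proof -
  have lim: "(\<lambda>n. real (f n) / real n * log 2 (real CARD('a))) \<longlonglongrightarrow> c * log 2 (real CARD('a))"
    by (intro tendsto_mult assms tendsto_const)
  have eq: "real (f n) / real n * log 2 (real CARD('a)) = log 2 (real (CARD('a) ^ f n)) / real n" for n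
  proof -
    have "log 2 (real CARD('a) ^ f n) = real (f n) * log 2 (real CARD('a))" by (rule log_nat_power) simp
    then show ?thesis by (simp add: of_nat_power)
  qed
  show ?thesis using lim unfolding eq .
qed

lemma closed_snd_le: "closed {R :: real \<times> real. snd R \<le> c}"
  by (rule closed_Collect_le) (auto intro!: continuous_intros)

lemma closed_lin_le: "closed {R :: real \<times> real. fst R / 2 + snd R \<le> c}"
  by (rule closed_Collect_le) (auto intro!: continuous_intros)

lemma ach_ns:
  assumes q: "CARD('a::{field,finite}) > 2"
  shows "achievable ns_box (bc_chan :: ('a \<times> 'a, 'a \<times> 'a, 'a \<times> 'a) chan)
           (log 2 (real CARD('a)), log 2 (real CARD('a)))"
proof -
  have "\<forall>n. \<exists>P. ns_box n (CARD('a) ^ n) (CARD('a) ^ n) {..<CARD('a) ^ n} P \<and>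
     err1 (bc_chan :: ('a \<times> 'a, 'a \<times> 'a, 'a \<times> 'a) chan) n (CARD('a) ^ n) (CARD('a) ^ n) {..<CARD('a) ^ n} P = 0 \<and>
     err2 (bc_chan :: ('a \<times> 'a, 'a \<times> 'a, 'a \<times> 'a) chan) n (CARD('a) ^ n) (CARD('a) ^ n) {..<CARD('a) ^ n} P = 0"
    using ns_exists by blast
  then obtain Pf where Pf: "\<forall>n. ns_box n (CARD('a) ^ n) (CARD('a) ^ n) {..<CARD('a) ^ n} (Pf n) \<and>
     err1 (bc_chan :: ('a \<times> 'a, 'a \<times> 'a, 'a \<times> 'a) chan) n (CARD('a) ^ n) (CARD('a) ^ n) {..<CARD('a) ^ n} (Pf n) = 0 \<and>
     err2 (bc_chan :: ('a \<times> 'a, 'a \<times> 'a, 'a \<times> 'a) chan) n (CARD('a) ^ n) (CARD('a) ^ n) {..<CARD('a) ^ n} (Pf n) = 0"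
    by metis
  have r1: "(\<lambda>n. real n / real n) \<longlonglongrightarrow> (1::real)"
  proof (rule Lim_transform_eventually[OF tendsto_const])
    show "\<forall>\<^sub>F n in sequentially. (1::real) = real n / real n"
      using eventually_ge_at_top[of "1::nat"] by eventually_elim simp
  qed
  have rate: "(\<lambda>n. log 2 (real (CARD('a) ^ n)) / real n) \<longlonglongrightarrow> log 2 (real CARD('a))"
    using rate_lim[where f="\<lambda>n. n", OF r1] by simp
  show ?thesis unfolding achievable_def
    by (rule exI[of _ "\<lambda>n. CARD('a) ^ n"], rule exI[of _ "\<lambda>n. CARD('a) ^ n"],
        rule exI[of _ "\<lambda>n. {..<CARD('a) ^ n}"], rule exI[of _ Pf]) (use Pf rate in auto)
qed

lemma ach_cl:
  assumes q: "CARD('a::{field,finite}) > 2"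
  shows "achievable classical_box (bc_chan :: ('a \<times> 'a, 'a \<times> 'a, 'a \<times> 'a) chan)
           (log 2 (real CARD('a)), log 2 (real CARD('a)) / 2)"
proof -
  have "\<forall>n. \<exists>P. classical_box n (CARD('a) ^ (2 * (n div 2))) (CARD('a) ^ (n div 2)) {..<CARD('a) ^ (2 * (n div 2))} P \<and>
     err1 (bc_chan :: ('a \<times> 'a, 'a \<times> 'a, 'a \<times> 'a) chan) n (CARD('a) ^ (2 * (n div 2))) (CARD('a) ^ (n div 2)) {..<CARD('a) ^ (2 * (n div 2))} P = 0 \<and>
     err2 (bc_chan :: ('a \<times> 'a, 'a \<times> 'a, 'a \<times> 'a) chan) n (CARD('a) ^ (2 * (n div 2))) (CARD('a) ^ (n div 2)) {..<CARD('a) ^ (2 * (n div 2))} P = 0"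
    using cl_exists by blast
  then obtain Pf where Pf: "\<forall>n. classical_box n (CARD('a) ^ (2 * (n div 2))) (CARD('a) ^ (n div 2)) {..<CARD('a) ^ (2 * (n div 2))} (Pf n) \<and>
     err1 (bc_chan :: ('a \<times> 'a, 'a \<times> 'a, 'a \<times> 'a) chan) n (CARD('a) ^ (2 * (n div 2))) (CARD('a) ^ (n div 2)) {..<CARD('a) ^ (2 * (n div 2))} (Pf n) = 0 \<and>
     err2 (bc_chan :: ('a \<times> 'a, 'a \<times> 'a, 'a \<times> 'a) chan) n (CARD('a) ^ (2 * (n div 2))) (CARD('a) ^ (n div 2)) {..<CARD('a) ^ (2 * (n div 2))} (Pf n) = 0"
    by metis
  have h2: "(\<lambda>n. real (2 * (n div 2)) / real n) \<longlonglongrightarrow> 2 * (1 / 2 :: real)"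
    using tendsto_mult[OF tendsto_const[of 2] half_lim] by (simp add: mult.assoc)
  have rate1: "(\<lambda>n. log 2 (real (CARD('a) ^ (2 * (n div 2)))) / real n) \<longlonglongrightarrow> log 2 (real CARD('a))"
    using rate_lim[where f="\<lambda>n. 2 * (n div 2)", OF h2] by simp
  have rate2: "(\<lambda>n. log 2 (real (CARD('a) ^ (n div 2))) / real n) \<longlonglongrightarrow> log 2 (real CARD('a)) / 2"
    using rate_lim[where f="\<lambda>n. n div 2", OF half_lim] by simp
  have m: "CARD('a) ^ k \<ge> 1" for k by simp
  show ?thesis unfolding achievable_def
    by (rule exI[of _ "\<lambda>n. CARD('a) ^ (2 * (n div 2))"], rule exI[of _ "\<lambda>n. CARD('a) ^ (n div 2)"],
        rule exI[of _ "\<lambda>n. {..<CARD('a) ^ (2 * (n div 2))}"], rule exI[of _ Pf]) (use Pf rate1 rate2 m in auto)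
qed

lemma conv_ns:
  assumes q: "CARD('a::{field,finite}) > 2"
    and ach: "achievable ns_box (bc_chan :: ('a \<times> 'a, 'a \<times> 'a, 'a \<times> 'a) chan) R"
  shows "snd R \<le> log 2 (real CARD('a))"
proof -
  obtain m1 m2 :: "nat \<Rightarrow> nat" and B :: "nat \<Rightarrow> nat set" and P :: "nat \<Rightarrow> ('a \<times> 'a, 'a \<times> 'a, 'a \<times> 'a) box" and L
    where H: "\<forall>n. m1 n \<ge> 1 \<and> m2 n \<ge> 1 \<and> ns_box n (m1 n) (m2 n) (B n) (P n)"
    and err: "(\<lambda>n. max (err1 (bc_chan :: ('a \<times> 'a, 'a \<times> 'a, 'a \<times> 'a) chan) n (m1 n) (m2 n) (B n) (P n))
                      (err2 (bc_chan :: ('a \<times> 'a, 'a \<times> 'a, 'a \<times> 'a) chan) n (m1 n) (m2 n) (B n) (P n))) \<longlonglongrightarrow> 0"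
    and L: "(\<lambda>n. log 2 (real (m2 n)) / real n) \<longlonglongrightarrow> L" "snd R \<le> L"
    using ach unfolding achievable_def by blast
  have ev: "eventually (\<lambda>n. max (err1 (bc_chan :: ('a \<times> 'a, 'a \<times> 'a, 'a \<times> 'a) chan) n (m1 n) (m2 n) (B n) (P n))
                      (err2 (bc_chan :: ('a \<times> 'a, 'a \<times> 'a, 'a \<times> 'a) chan) n (m1 n) (m2 n) (B n) (P n)) < 1 / 2) sequentially"
    by (rule order_tendstoD(2)[OF err]) simp
  have qpos: "real CARD('a) > 0" by simp
  have "eventually (\<lambda>n. log 2 (real (m2 n)) / real n \<le> log 2 (real CARD('a)) + 1 / real n) sequentially"
    using ev eventually_ge_at_top[of "1::nat"]
  proof eventually_elim
    case (elim n)
    have e2: "err2 (bc_chan :: ('a \<times> 'a, 'a \<times> 'a, 'a \<times> 'a) chan) n (m1 n) (m2 n) (B n) (P n) < 1 / 2"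
      using elim(1) by simp
    have b: "err2 (bc_chan :: ('a \<times> 'a, 'a \<times> 'a, 'a \<times> 'a) chan) n (m1 n) (m2 n) (B n) (P n) \<ge> 1 - real CARD('a) ^ n / real (m2 n)"
      using ns_err2_bound[of n "m1 n" "m2 n" "B n" "P n", OF _ _ _ q] H by blast
    have m2p: "real (m2 n) > 0" using H by (metis of_nat_0_less_iff less_le_trans zero_less_one)
    have "real CARD('a) ^ n / real (m2 n) > 1 / 2" using e2 b by linarith
    then have lt: "real (m2 n) < 2 * real CARD('a) ^ n" using m2p by (simp add: field_simps)
    have "log 2 (real (m2 n)) < log 2 (2 * real CARD('a) ^ n)"
      using lt m2p by (subst log_less_cancel_iff) auto
    also have "\<dots> = 1 + real n * log 2 (real CARD('a))"
      using qpos by (simp add: log_mult log_nat_power)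
    finally have "log 2 (real (m2 n)) / real n \<le> (1 + real n * log 2 (real CARD('a))) / real n"
      using elim(2) by (intro divide_right_mono) auto
    also have "\<dots> = log 2 (real CARD('a)) + 1 / real n" using elim(2) by (simp add: field_simps)
    finally show ?case .
  qed
  moreover have "(\<lambda>n. log 2 (real CARD('a)) + 1 / real n) \<longlonglongrightarrow> log 2 (real CARD('a)) + 0"
    by (intro tendsto_add tendsto_const lim_1_over_n)
  ultimately have "L \<le> log 2 (real CARD('a))"
    using tendsto_le[OF trivial_limit_sequentially _ L(1)] by simp
  with L(2) show ?thesis by simp
qed

lemma log_sqrt2: "x > 0 \<Longrightarrow> log 2 (sqrt x) = log 2 x / 2"
proof -
  assume x: "x > 0"
  have "log 2 x = log 2 (sqrt x * sqrt x)" using x by simp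
  also have "\<dots> = 2 * log 2 (sqrt x)" using x by (subst log_mult_pos) auto
  finally show ?thesis by simp
qed

lemma conv_cl:
  assumes q: "CARD('a::{field,finite}) > 2"
    and ach: "achievable classical_box (bc_chan :: ('a \<times> 'a, 'a \<times> 'a, 'a \<times> 'a) chan) R"
  shows "fst R / 2 + snd R \<le> log 2 (real CARD('a))"
proof -
  obtain m1 m2 :: "nat \<Rightarrow> nat" and B :: "nat \<Rightarrow> nat set" and P :: "nat \<Rightarrow> ('a \<times> 'a, 'a \<times> 'a, 'a \<times> 'a) box" and L1 L2
    where H: "\<forall>n. m1 n \<ge> 1 \<and> m2 n \<ge> 1 \<and> classical_box n (m1 n) (m2 n) (B n) (P n)"
    and err: "(\<lambda>n. max (err1 (bc_chan :: ('a \<times> 'a, 'a \<times> 'a, 'a \<times> 'a) chan) n (m1 n) (m2 n) (B n) (P n))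
                      (err2 (bc_chan :: ('a \<times> 'a, 'a \<times> 'a, 'a \<times> 'a) chan) n (m1 n) (m2 n) (B n) (P n))) \<longlonglongrightarrow> 0"
    and L1: "(\<lambda>n. log 2 (real (m1 n)) / real n) \<longlonglongrightarrow> L1" "fst R \<le> L1"
    and L2: "(\<lambda>n. log 2 (real (m2 n)) / real n) \<longlonglongrightarrow> L2" "snd R \<le> L2"
    using ach unfolding achievable_def by blast
  have ev: "eventually (\<lambda>n. max (err1 (bc_chan :: ('a \<times> 'a, 'a \<times> 'a, 'a \<times> 'a) chan) n (m1 n) (m2 n) (B n) (P n))
                      (err2 (bc_chan :: ('a \<times> 'a, 'a \<times> 'a, 'a \<times> 'a) chan) n (m1 n) (m2 n) (B n) (P n)) < 1 / 16) sequentially"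
    by (rule order_tendstoD(2)[OF err]) simp
  have qpos: "real CARD('a) > 0" by simp
  have evb: "eventually (\<lambda>n. (log 2 (real (m1 n)) / real n) / 2 + log 2 (real (m2 n)) / real n
      \<le> log 2 (real CARD('a)) + 3 / real n) sequentially"
    using ev eventually_ge_at_top[of "1::nat"]
  proof eventually_elim
    case (elim n)
    define e1 where "e1 = err1 (bc_chan :: ('a \<times> 'a, 'a \<times> 'a, 'a \<times> 'a) chan) n (m1 n) (m2 n) (B n) (P n)"
    define e2 where "e2 = err2 (bc_chan :: ('a \<times> 'a, 'a \<times> 'a, 'a \<times> 'a) chan) n (m1 n) (m2 n) (B n) (P n)"
    have e1: "e1 < 1 / 16" and e2: "e2 < 1 / 16" using elim(1) by (simp_all add: e1_def e2_def)
    have m1p: "real (m1 n) > 0" using H by (metis of_nat_0_less_iff less_le_trans zero_less_one)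
    have m2p: "real (m2 n) > 0" using H by (metis of_nat_0_less_iff less_le_trans zero_less_one)
    define l where "l = 2 / sqrt (real (m1 n))"
    have lp: "l > 0" using m1p by (simp add: l_def)
    have b: "1 - e2 \<le> (1 + 1 / (l^2 * real (m1 n)) + e1) / 2 + l * real CARD('a) ^ n / real (m2 n)"
      unfolding e1_def e2_def using cl_bound[of n "m1 n" "m2 n" "B n" "P n", OF _ _ _ q lp] H by blast
    have l2: "l^2 * real (m1 n) = 4" using m1p by (simp add: l_def power_divide)
    define X where "X = l * real CARD('a) ^ n / real (m2 n)"
    have "1 - e2 \<le> (1 + 1 / 4 + e1) / 2 + X" using b[unfolded l2] unfolding X_def .
    then have "X > 9 / 32" using e1 e2 by (simp add: field_simps)
    then have "l * real CARD('a) ^ n / real (m2 n) > 9 / 32" unfolding X_def .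
    then have "2 * real CARD('a) ^ n / (sqrt (real (m1 n)) * real (m2 n)) > 9 / 32"
      by (simp add: l_def)
    then have "9 * (sqrt (real (m1 n)) * real (m2 n)) < 64 * real CARD('a) ^ n"
      using m1p m2p by (simp add: field_simps)
    moreover have "real CARD('a) ^ n > 0" by simp
    ultimately have lt: "sqrt (real (m1 n)) * real (m2 n) < 8 * real CARD('a) ^ n"
      by linarith
    have "log 2 (real (m1 n)) / 2 + log 2 (real (m2 n)) = log 2 (sqrt (real (m1 n)) * real (m2 n))"
      using m1p m2p by (simp add: log_mult log_sqrt2)
    also have "\<dots> < log 2 (8 * real CARD('a) ^ n)"
      using lt m1p m2p by (subst log_less_cancel_iff) auto
    also have "\<dots> = 3 + real n * log 2 (real CARD('a))"
    proof -
      have "log 2 (8::real) = 3"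
      proof -
        have "log 2 ((2::real) ^ 3) = real 3 * log 2 2" by (rule log_nat_power) simp
        then show ?thesis by simp
      qed
      then show ?thesis using qpos by (simp add: log_mult log_nat_power)
    qed
    finally have "(log 2 (real (m1 n)) / 2 + log 2 (real (m2 n))) / real n \<le> (3 + real n * log 2 (real CARD('a))) / real n"
      using elim(2) by (intro divide_right_mono) auto
    also have "\<dots> = log 2 (real CARD('a)) + 3 / real n" using elim(2) by (simp add: field_simps)
    finally show ?case by (simp add: add_divide_distrib)
  qed
  have flim: "(\<lambda>n. log 2 (real CARD('a)) + 3 / real n) \<longlonglongrightarrow> log 2 (real CARD('a)) + 3 * 0"
  proof -
    have "(\<lambda>n. 3 * (1 / real n)) \<longlonglongrightarrow> 3 * (0::real)" by (intro tendsto_mult tendsto_const lim_1_over_n)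
    then show ?thesis by (intro tendsto_add tendsto_const) simp
  qed
  have glim: "(\<lambda>n. (log 2 (real (m1 n)) / real n) / 2 + log 2 (real (m2 n)) / real n) \<longlonglongrightarrow> L1 / 2 + L2"
    by (intro tendsto_add tendsto_divide L1(1) L2(1) tendsto_const) simp
  have "L1 / 2 + L2 \<le> log 2 (real CARD('a)) + 3 * 0"
    by (rule tendsto_le[OF trivial_limit_sequentially flim glim evb])
  with L1(2) L2(2) show ?thesis by simp
qed

theorem theorem5:
  assumes "CARD('a::{field,finite}) > 2"
  shows "((log 2 (real CARD('a)), log 2 (real CARD('a)))
            \<in> capacity_region_NS (bc_chan :: ('a \<times> 'a, 'a \<times> 'a, 'a \<times> 'a) chan) \<and>
          (\<forall>R2. (log 2 (real CARD('a)), R2) \<in> capacity_region_NS (bc_chan :: ('a \<times> 'a, 'a \<times> 'a, 'a \<times> 'a) chan)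
              \<longrightarrow> R2 \<le> log 2 (real CARD('a))))
       \<and> ((log 2 (real CARD('a)), log 2 (real CARD('a)) / 2)
            \<in> capacity_region (bc_chan :: ('a \<times> 'a, 'a \<times> 'a, 'a \<times> 'a) chan) \<and>
          (\<forall>R2. (log 2 (real CARD('a)), R2) \<in> capacity_region (bc_chan :: ('a \<times> 'a, 'a \<times> 'a, 'a \<times> 'a) chan)
              \<longrightarrow> R2 \<le> log 2 (real CARD('a)) / 2))"
proof -
  note q = assms
  have c1: "closure {R. achievable ns_box (bc_chan :: ('a \<times> 'a, 'a \<times> 'a, 'a \<times> 'a) chan) R}
      \<subseteq> {R. snd R \<le> log 2 (real CARD('a))}"
    by (rule closure_minimal) (use conv_ns[OF q] closed_snd_le in auto)
  have c2: "closure {R. achievable classical_box (bc_chan :: ('a \<times> 'a, 'a \<times> 'a, 'a \<times> 'a) chan) R}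
      \<subseteq> {R. fst R / 2 + snd R \<le> log 2 (real CARD('a))}"
    by (rule closure_minimal) (use conv_cl[OF q] closed_lin_le in auto)
  have a1: "(log 2 (real CARD('a)), log 2 (real CARD('a)))
            \<in> capacity_region_NS (bc_chan :: ('a \<times> 'a, 'a \<times> 'a, 'a \<times> 'a) chan)"
    unfolding capacity_region_NS_def using ach_ns[OF q] closure_subset by blast
  have a2: "(log 2 (real CARD('a)), log 2 (real CARD('a)) / 2)
            \<in> capacity_region (bc_chan :: ('a \<times> 'a, 'a \<times> 'a, 'a \<times> 'a) chan)"
    unfolding capacity_region_def using ach_cl[OF q] closure_subset by blast
  have b1: "\<forall>R2. (log 2 (real CARD('a)), R2) \<in> capacity_region_NS (bc_chan :: ('a \<times> 'a, 'a \<times> 'a, 'a \<times> 'a) chan)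
              \<longrightarrow> R2 \<le> log 2 (real CARD('a))"
    unfolding capacity_region_NS_def using c1 by auto
  have b2: "\<forall>R2. (log 2 (real CARD('a)), R2) \<in> capacity_region (bc_chan :: ('a \<times> 'a, 'a \<times> 'a, 'a \<times> 'a) chan)
              \<longrightarrow> R2 \<le> log 2 (real CARD('a)) / 2"
  proof (intro allI impI)
    fix R2 assume "(log 2 (real CARD('a)), R2) \<in> capacity_region (bc_chan :: ('a \<times> 'a, 'a \<times> 'a, 'a \<times> 'a) chan)"
    then have "log 2 (real CARD('a)) / 2 + R2 \<le> log 2 (real CARD('a))"
      unfolding capacity_region_def using c2 by auto
    then show "R2 \<le> log 2 (real CARD('a)) / 2" by simp
  qed
  show ?thesis using a1 a2 b1 b2 by blast
qed

end
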